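(* Assume the continuity assumption holds and that the estimators $\hat p_k$ take values in $[0,1]$. Then there is a constant $C>0$, not depending on $n$, $N$, $u$ or the estimators, such that $$\mathbb{E}[\mathcal{R}_{\lambda^*}(\hat g)]-\mathcal{R}_{\lambda^*}(g^*_{\rm fair})\le C\Big(\mathbb{E}\big[\|\hat{\mathbf p}-\mathbf p\|_1\big]+\sum_{s\in\{-1,1\}}\mathbb{E}|\hat\pi_s-\pi_s|+\mathbb{E}[\mathcal{U}(\hat g)]+u\Big),$$ where $\|\hat{\mathbf p}-\mathbf p\|_1=\sum_{k=1}^K|\hat p_k(X,S)-p_k(X,S)|$ with $(X,S)$ a new independent draw (the expectation being over it and the data).
   Context: $(X,S,Y)\sim\mathbb{P}$, $X\in\mathcal{X}\subset\mathbb{R}^d$, $S\in\{-1,1\}$, $Y\in[K]$, $\pi_s=\mathbb{P}(S=s)>0$, $p_k(x,s)=\mathbb{P}(Y=k\mid X=x,S=s)$. Risk $\mathcal{R}(g)=\mathbb{P}(g(X,S)\ne Y)$; unfairness $\mathcal{U}(g)=\max_k|\mathbb{P}(g(X,S)=k\mid S=1)-\mathbb{P}(g(X,S)=k\mid S=-1)|$; fair-risk $\mathcal{R}_\lambda(g)=\mathcal{R}(g)+\sum_k\lambda_k[\mathbb{P}(g(X,S)=k\mid S=1)-\mathbb{P}(g(X,S)=k\mid S=-1)]$. Continuity assumption: for all $k\neq j$ and $s$, $t\mapsto\mathbb{P}(p_k(X,S)-p_j(X,S)\le t\mid S=s)$ is continuous. $\lambda^*$ minimizes $\lambda\mapsto\sum_s\mathbb{E}[\max_k(\pi_sp_k(X,s)-s\lambda_k)\mid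 S=s]$ over $\mathbb{R}^K$, and $g^*_{\rm fair}(x,s)\in\arg\max_k(\pi_sp_k(x,s)-s\lambda^*_k)$ (an optimal exactly fair classifier). Plug-in construction: $\mathcal{D}_n$ is a labeled i.i.d. sample from $\mathbb{P}$ from which estimators $\hat p_k$ are built. Independently, $\mathcal{D}'_N$ consists of $N$ i.i.d. copies of $(X,S)$; $N_s$ is the number with $S=s$, $\hat\pi_s=N_s/N$, and $X^s_1,\dots,X^s_{N_s}$ are the features with $S=s$. Fix $u>0$; $(\zeta^s_{k,i})$ are i.i.d. Uniform$[0,u]$ independent of everything, $\bar p_k(x,s,\zeta)=\hat p_k(x,s)+\zeta$. $\hat\lambda$ minimizes $\lambda\mapsto\sum_s\frac1{N_s}\sum_{i=1}^{N_s}\max_k(\hat\pi_s\bar p_k(X^s_i,s,\zeta^s_{k,i})-s\lambda_k)$. The randomized classifier is $\hat g(x,s)=\arg\max_k(\hat\pi_s\bar p_k(x,s,\zeta_k)-s\hat\lambda_k)$ with fresh i.i.d. Uniform$[0,u]$ perturbations $(\zeta_k)$ at each prediction. $\mathcal{R}_{\lambda^*}(\hat g)$ and $\mathcal{U}(\hat g)$ are computed conditionally on the data and $(\zeta^s_{k,i})$, over a new $(X,S,Y)$ and the fresh perturbations. *)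

theory Defs
  imports "HOL-Probability.Probability"
begin

text \<open>Observations are triples (X,S,Y) of type 'x * int * nat, where
  S is the sensitive attribute (in {-1,1}) and Y the label (in {1..K}).\<close>

definition XS_space :: "('x::euclidean_space \<times> int) measure" where
  "XS_space = (borel :: 'x measure) \<Otimes>\<^sub>M (count_space UNIV :: int measure)"

definition XSY_space :: "('x::euclidean_space \<times> int \<times> nat) measure" where
  "XSY_space = (borel :: 'x measure) \<Otimes>\<^sub>M ((count_space UNIV :: int measure) \<Otimes>\<^sub>M (count_space UNIV :: nat measure))"

definition piS :: "('x \<times> int \<times> nat) measure \<Rightarrow> int \<Rightarrow> real" where
  "piS P s = measure P {w \<in> space P. fst (snd w) = s}"

text \<open>Randomized classifiers: g x s z, with z a perturbation drawn from Z, fresh at each prediction.\<close>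

definition pred_rate :: "('x \<times> int \<times> nat) measure \<Rightarrow> 'z measure \<Rightarrow> ('x \<Rightarrow> int \<Rightarrow> 'z \<Rightarrow> nat) \<Rightarrow> nat \<Rightarrow> int \<Rightarrow> real" where
  "pred_rate P Z g k s =
     measure (P \<Otimes>\<^sub>M Z) {(w, z) \<in> space (P \<Otimes>\<^sub>M Z). g (fst w) (fst (snd w)) z = k \<and> fst (snd w) = s} / piS P s"

definition rrisk :: "('x \<times> int \<times> nat) measure \<Rightarrow> 'z measure \<Rightarrow> ('x \<Rightarrow> int \<Rightarrow> 'z \<Rightarrow> nat) \<Rightarrow> real" where
  "rrisk P Z g = measure (P \<Otimes>\<^sub>M Z) {(w, z) \<in> space (P \<Otimes>\<^sub>M Z). g (fst w) (fst (snd w)) z \<noteq> snd (snd w)}"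

definition runfair :: "('x \<times> int \<times> nat) measure \<Rightarrow> 'z measure \<Rightarrow> nat \<Rightarrow> ('x \<Rightarrow> int \<Rightarrow> 'z \<Rightarrow> nat) \<Rightarrow> real" where
  "runfair P Z K g = Max ((\<lambda>k. \<bar>pred_rate P Z g k 1 - pred_rate P Z g k (-1)\<bar>) ` {1..K})"

definition rfrisk :: "('x \<times> int \<times> nat) measure \<Rightarrow> 'z measure \<Rightarrow> nat \<Rightarrow> (nat \<Rightarrow> real) \<Rightarrow> ('x \<Rightarrow> int \<Rightarrow> 'z \<Rightarrow> nat) \<Rightarrow> real" where
  "rfrisk P Z K lam g = rrisk P Z g + (\<Sum>k\<in>{1..K}. lam k * (pred_rate P Z g k 1 - pred_rate P Z g k (-1)))"

text \<open>Trivial perturbation space, used to view deterministic classifiers as randomized ones.\<close>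
definition Zdet :: "unit measure" where
  "Zdet = return (count_space UNIV) ()"

definition argmaxK :: "nat \<Rightarrow> (nat \<Rightarrow> real) \<Rightarrow> nat" where
  "argmaxK K f = (LEAST k. k \<in> {1..K} \<and> (\<forall>j\<in>{1..K}. f j \<le> f k))"

definition fair_obj :: "('x \<times> int \<times> nat) measure \<Rightarrow> (nat \<Rightarrow> 'x \<Rightarrow> int \<Rightarrow> real) \<Rightarrow> nat \<Rightarrow> (nat \<Rightarrow> real) \<Rightarrow> real" where
  "fair_obj P p K lam = (\<Sum>s\<in>{-1,1::int}.
     (\<integral>w. (if fst (snd w) = s then Max ((\<lambda>k. piS P s * p k (fst w) s - of_int s * lam k) ` {1..K}) else 0) \<partial>P)
     / piS P s)"

definition gfair :: "('x \<times> int \<times> nat) measure \<Rightarrow> (nat \<Rightarrow> 'x \<Rightarrow> int \<Rightarrow> real) \<Rightarrow> nat \<Rightarrow> (nat \<Rightarrow> real) \<Rightarrow> 'x \<Rightarrow> int \<Rightarrow> nat" where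
  "gfair P p K lam x s = argmaxK K (\<lambda>k. piS P s * p k x s - of_int s * lam k)"

text \<open>Unlabeled sample D'_N : (nat => 'x * int), indices i < N.\<close>
definition Nsz :: "nat \<Rightarrow> (nat \<Rightarrow> 'x \<times> int) \<Rightarrow> int \<Rightarrow> nat" where
  "Nsz N d' s = card {i \<in> {..<N}. snd (d' i) = s}"

definition pihat :: "nat \<Rightarrow> (nat \<Rightarrow> 'x \<times> int) \<Rightarrow> int \<Rightarrow> real" where
  "pihat N d' s = real (Nsz N d' s) / real N"

text \<open>Empirical objective; the perturbation zeta^s_{k,i} is z (s,k,i), with i the index in D'_N.\<close>
definition emp_obj :: "nat \<Rightarrow> nat \<Rightarrow> (nat \<Rightarrow> 'x \<Rightarrow> int \<Rightarrow> real) \<Rightarrow> (nat \<Rightarrow> 'x \<times> int) \<Rightarrow> (int \<times> nat \<times> nat \<Rightarrow> real) \<Rightarrow> (nat \<Rightarrow> real) \<Rightarrow> real" where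
  "emp_obj K N ph d' z lam = (\<Sum>s\<in>{-1,1::int}.
     (1 / real (Nsz N d' s)) *
     (\<Sum>i\<in>{i \<in> {..<N}. snd (d' i) = s}.
        Max ((\<lambda>k. pihat N d' s * (ph k (fst (d' i)) s + z (s, k, i)) - of_int s * lam k) ` {1..K})))"

definition ghat :: "nat \<Rightarrow> nat \<Rightarrow> (nat \<Rightarrow> 'x \<Rightarrow> int \<Rightarrow> real) \<Rightarrow> (nat \<Rightarrow> 'x \<times> int) \<Rightarrow> (nat \<Rightarrow> real) \<Rightarrow> 'x \<Rightarrow> int \<Rightarrow> (nat \<Rightarrow> real) \<Rightarrow> nat" where
  "ghat K N ph d' lamh x s zeta = argmaxK K (\<lambda>k. pihat N d' s * (ph k x s + zeta k) - of_int s * lamh k)"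

definition unif :: "real \<Rightarrow> real measure" where
  "unif u = uniform_measure lborel {0..u}"

definition Zfresh :: "nat \<Rightarrow> real \<Rightarrow> (nat \<Rightarrow> real) measure" where
  "Zfresh K u = PiM {1..K} (\<lambda>_. unif u)"

definition Zemp :: "nat \<Rightarrow> nat \<Rightarrow> real \<Rightarrow> (int \<times> nat \<times> nat \<Rightarrow> real) measure" where
  "Zemp K N u = PiM ({-1,1} \<times> {1..K} \<times> {..<N}) (\<lambda>_. unif u)"

definition sampleD :: "nat \<Rightarrow> ('x::euclidean_space \<times> int \<times> nat) measure \<Rightarrow> (nat \<Rightarrow> 'x \<times> int \<times> nat) measure" where
  "sampleD n P = PiM {..<n} (\<lambda>_. P)"

definition sampleD' :: "nat \<Rightarrow> ('x::euclidean_space \<times> int \<times> nat) measure \<Rightarrow> (nat \<Rightarrow> 'x \<times> int) measure" where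
  "sampleD' N P = PiM {..<N} (\<lambda>_. distr P XS_space (\<lambda>w. (fst w, fst (snd w))))"

end

theory Submission
  imports Defs
begin


lemma int_bdd:
  fixes f :: "'a \<Rightarrow> real"
  assumes "finite_measure M" "f \<in> borel_measurable M" "\<And>x. x \<in> space M \<Longrightarrow> \<bar>f x\<bar> \<le> B"
  shows "integrable M f"
  using assms by (intro finite_measure.integrable_const_bound[where B=B]) (auto intro!: AE_I2)

lemma measure_Collect_int:
  assumes "finite_measure M" "{x \<in> space M. R x} \<in> sets M"
  shows "measure M {x \<in> space M. R x} = (\<integral>x. (if R x then 1 else 0) \<partial>M)"
proof -
  have "measure M {x \<in> space M. R x} = (\<integral>x. indicator {x \<in> space M. R x} x \<partial>M)"
    by (simp add: Int_absorb2)
  also have "\<dots> = (\<integral>x. (if R x then 1 else 0) \<partial>M)"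
    by (rule Bochner_Integration.integral_cong) (auto simp: indicator_def)
  finally show ?thesis .
qed

lemma pred_eq_count[measurable (raw)]:
  fixes f g :: "'a \<Rightarrow> 'c::countable"
  assumes [measurable]: "f \<in> M \<rightarrow>\<^sub>M count_space UNIV" "g \<in> M \<rightarrow>\<^sub>M count_space UNIV"
  shows "Measurable.pred M (\<lambda>x. f x = g x)"
proof -
  have "(\<lambda>x. f x = g x) = (\<lambda>x. \<exists>c. f x = c \<and> g x = c)" by auto
  moreover have "Measurable.pred M (\<lambda>x. \<exists>c. f x = c \<and> g x = c)" by measurable
  ultimately show ?thesis by simp
qed

lemma meas_pair_count:
  fixes f :: "'a \<Rightarrow> 'c::countable" and g :: "'a \<Rightarrow> 'd::countable"
  assumes [measurable]: "f \<in> M \<rightarrow>\<^sub>M count_space UNIV" "g \<in> M \<rightarrow>\<^sub>M count_space UNIV"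
  shows "(\<lambda>x. (f x, g x)) \<in> M \<rightarrow>\<^sub>M count_space UNIV"
proof (subst measurable_count_space_eq2_countable, safe)
  fix a :: "'c \<times> 'd"
  obtain a1 a2 where a: "a = (a1, a2)" by fastforce
  have "(\<lambda>x. (f x, g x)) -` {a} \<inter> space M = {x \<in> space M. f x = a1 \<and> g x = a2}" by (auto simp: a)
  also have "\<dots> \<in> sets M" by measurable
  finally show "(\<lambda>x. (f x, g x)) -` {a} \<inter> space M \<in> sets M" .
qed auto

lemma meas_count_fun2:
  fixes f :: "'a \<Rightarrow> 'c::countable" and g :: "'a \<Rightarrow> 'd::countable" and h :: "'c \<Rightarrow> 'd \<Rightarrow> real"
  assumes "f \<in> M \<rightarrow>\<^sub>M count_space UNIV" "g \<in> M \<rightarrow>\<^sub>M count_space UNIV"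
  shows "(\<lambda>x. h (f x) (g x)) \<in> borel_measurable M"
proof -
  have "(\<lambda>y. h (fst y) (snd y)) \<in> count_space UNIV \<rightarrow>\<^sub>M borel" by simp
  from measurable_compose[OF meas_pair_count[OF assms] this] show ?thesis by simp
qed

lemma space_XS: "space XS_space = UNIV"
  by (simp add: XS_space_def space_pair_measure)
lemma space_XSY: "space XSY_space = UNIV"
  by (simp add: XSY_space_def space_pair_measure)

locale fsetup =
  fixes P :: "('x::euclidean_space \<times> int \<times> nat) measure"
    and K :: nat
    and p :: "nat \<Rightarrow> 'x \<Rightarrow> int \<Rightarrow> real"
  assumes P_prob: "prob_space P"
    and P_sets: "sets P = sets XSY_space"
    and P_supp: "AE w in P. fst (snd w) \<in> {-1, 1} \<and> snd (snd w) \<in> {1..K}"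
    and pi_pos: "\<forall>s\<in>{-1, 1}. piS P s > 0"
    and p_meas: "\<forall>k. (\<lambda>(x, s). p k x s) \<in> borel_measurable XS_space"
    and p_range: "\<forall>k x s. 0 \<le> p k x s \<and> p k x s \<le> 1"
    and p_cond: "\<forall>k A. A \<in> sets XS_space \<longrightarrow>
        measure P {w \<in> space P. (fst w, fst (snd w)) \<in> A \<and> snd (snd w) = k}
        = (\<integral>w. indicator A (fst w, fst (snd w)) * p k (fst w) (fst (snd w)) \<partial>P)"
begin

interpretation PP: prob_space P by (rule P_prob)

lemma space_P: "space P = UNIV"
  using sets_eq_imp_space_eq[OF P_sets] space_XSY by simp

lemma K_pos: "K \<ge> 1"
proof (rule ccontr)
  assume "\<not> K \<ge> 1" then have "K = 0" by simp
  with P_supp have "AE w in P. False" by (auto elim: AE_mp)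
  then show False using PP.AE_False by simp
qed

lemma mXS[measurable]: "(\<lambda>w. (fst w, fst (snd w))) \<in> P \<rightarrow>\<^sub>M XS_space"
  unfolding measurable_cong_sets[OF P_sets refl] XS_space_def XSY_space_def by measurable

lemma mX[measurable]: "(\<lambda>w. fst w) \<in> P \<rightarrow>\<^sub>M borel"
  unfolding measurable_cong_sets[OF P_sets refl] XSY_space_def by measurable

lemma mS[measurable]: "(\<lambda>w. fst (snd w)) \<in> P \<rightarrow>\<^sub>M count_space UNIV"
  unfolding measurable_cong_sets[OF P_sets refl] XSY_space_def by measurable

lemma mY[measurable]: "(\<lambda>w. snd (snd w)) \<in> P \<rightarrow>\<^sub>M count_space UNIV"
  unfolding measurable_cong_sets[OF P_sets refl] XSY_space_def by measurable

lemma mpXS[measurable]: "(\<lambda>xs. p k (fst xs) (snd xs)) \<in> borel_measurable XS_space"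
  using p_meas by (simp add: case_prod_beta')

lemma mp[measurable]: "(\<lambda>w. p k (fst w) (fst (snd w))) \<in> borel_measurable P"
  using measurable_compose[OF mXS mpXS[of k]] by simp

lemma pi_pos': "s \<in> {-1,1} \<Longrightarrow> piS P s > 0" using pi_pos by auto

lemma piS_eq: "piS P s = (\<integral>w. (if fst (snd w) = s then 1 else 0) \<partial>P)"
  unfolding piS_def by (rule measure_Collect_int) (auto intro: PP.finite_measure_axioms)

definition Phi :: "(nat \<Rightarrow> real) \<Rightarrow> 'x \<times> int \<times> nat \<Rightarrow> nat \<Rightarrow> real" where
  "Phi lam w k = p k (fst w) (fst (snd w)) -
     (if fst (snd w) \<in> {-1,1} then of_int (fst (snd w)) * lam k / piS P (fst (snd w)) else 0)"

context
  fixes Z :: "'z measure" and g :: "'x \<Rightarrow> int \<Rightarrow> 'z \<Rightarrow> nat"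
  assumes Z: "prob_space Z"
    and gm: "(\<lambda>q. g (fst (fst q)) (snd (fst q)) (snd q)) \<in> (XS_space \<Otimes>\<^sub>M Z) \<rightarrow>\<^sub>M count_space UNIV"
    and gr: "\<And>x s z. g x s z \<in> {1..K}"
begin

interpretation ZZ: prob_space Z by (rule Z)
interpretation PZ: pair_prob_space P Z by unfold_locales

lemma gmQ[measurable]: "(\<lambda>q. g (fst (fst q)) (fst (snd (fst q))) (snd q)) \<in> (P \<Otimes>\<^sub>M Z) \<rightarrow>\<^sub>M count_space UNIV"
proof -
  have "(\<lambda>q. ((fst (fst q), fst (snd (fst q))), snd q)) \<in> (P \<Otimes>\<^sub>M Z) \<rightarrow>\<^sub>M (XS_space \<Otimes>\<^sub>M Z)"
  proof -
    have "(\<lambda>q. (fst (fst q), fst (snd (fst q)))) \<in> (P \<Otimes>\<^sub>M Z) \<rightarrow>\<^sub>M XS_space"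
      using measurable_compose[OF measurable_fst mXS] by (simp add: comp_def)
    then show ?thesis by measurable
  qed
  from measurable_compose[OF this gm] show ?thesis by simp
qed

lemma gsec: "z \<in> space Z \<Longrightarrow> (\<lambda>xs. g (fst xs) (snd xs) z) \<in> XS_space \<rightarrow>\<^sub>M count_space UNIV"
proof -
  assume z: "z \<in> space Z"
  have "(\<lambda>xs. (xs, z)) \<in> XS_space \<rightarrow>\<^sub>M (XS_space \<Otimes>\<^sub>M Z)" using z by measurable
  from measurable_compose[OF this gm] show ?thesis by simp
qed

lemma mSQ[measurable]: "(\<lambda>q. fst (snd (fst q))) \<in> (P \<Otimes>\<^sub>M Z) \<rightarrow>\<^sub>M count_space UNIV"
  using measurable_compose[OF measurable_fst mS] by (simp add: comp_def)
lemma mYQ[measurable]: "(\<lambda>q. snd (snd (fst q))) \<in> (P \<Otimes>\<^sub>M Z) \<rightarrow>\<^sub>M count_space UNIV"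
  using measurable_compose[OF measurable_fst mY] by (simp add: comp_def)
lemma mpQ[measurable]: "(\<lambda>q. p k (fst (fst q)) (fst (snd (fst q)))) \<in> borel_measurable (P \<Otimes>\<^sub>M Z)"
  using measurable_compose[OF measurable_fst mp] by (simp add: comp_def)

lemma ind_int: "integrable (P \<Otimes>\<^sub>M Z) (\<lambda>q. if R q then (1::real) else 0)"
  if "Measurable.pred (P \<Otimes>\<^sub>M Z) R" 
  using that by (intro int_bdd[where B=1]) (auto intro: PZ.finite_measure_axioms)

lemma gY_eq: "(\<integral>q. (if g (fst (fst q)) (fst (snd (fst q))) (snd q) = k \<and> snd (snd (fst q)) = k then 1 else 0) \<partial>(P \<Otimes>\<^sub>M Z))
   = (\<integral>q. (if g (fst (fst q)) (fst (snd (fst q))) (snd q) = k then p k (fst (fst q)) (fst (snd (fst q))) else 0) \<partial>(P \<Otimes>\<^sub>M Z))"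
proof -
  let ?f = "\<lambda>w z. (if g (fst w) (fst (snd w)) z = k \<and> snd (snd w) = k then 1 else (0::real))"
  let ?h = "\<lambda>w z. (if g (fst w) (fst (snd w)) z = k then p k (fst w) (fst (snd w)) else 0)"
  have i1: "integrable (P \<Otimes>\<^sub>M Z) (case_prod ?f)"
    by (intro int_bdd[where B=1]) (auto intro: PZ.finite_measure_axioms simp: case_prod_beta')
  have i2: "integrable (P \<Otimes>\<^sub>M Z) (case_prod ?h)"
    using p_range by (intro int_bdd[where B=1]) (auto intro: PZ.finite_measure_axioms simp: case_prod_beta')
  have "(\<integral>z. (\<integral>w. ?f w z \<partial>P) \<partial>Z) = (\<integral>z. (\<integral>w. ?h w z \<partial>P) \<partial>Z)"
  proof (rule Bochner_Integration.integral_cong[OF refl])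
    fix z assume z: "z \<in> space Z"
    define A where "A = {xs. g (fst xs) (snd xs) z = k}"
    have A: "A \<in> sets XS_space"
    proof -
      have "A = (\<lambda>xs. g (fst xs) (snd xs) z) -` {k} \<inter> space XS_space" by (auto simp: A_def space_XS)
      then show ?thesis using measurable_sets[OF gsec[OF z], of "{k}"] by simp
    qed
    have "(\<integral>w. ?f w z \<partial>P) = measure P {w \<in> space P. (fst w, fst (snd w)) \<in> A \<and> snd (snd w) = k}"
    proof -
      have "{w \<in> space P. (fst w, fst (snd w)) \<in> A \<and> snd (snd w) = k} \<in> sets P"
      proof -
        have [measurable]: "(\<lambda>w. g (fst w) (fst (snd w)) z) \<in> P \<rightarrow>\<^sub>M count_space UNIV"
          using measurable_compose[OF mXS gsec[OF z]] by simp
        have "{w \<in> space P. (fst w, fst (snd w)) \<in> A \<and> snd (snd w) = k} = {w \<in> space P. g (fst w) (fst (snd w)) z = k \<and> snd (snd w) = k}"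
          by (auto simp: A_def)
        also have "\<dots> \<in> sets P" by measurable
        finally show ?thesis .
      qed
      from measure_Collect_int[OF PP.finite_measure_axioms this] show ?thesis by (simp add: A_def)
    qed
    also have "\<dots> = (\<integral>w. indicator A (fst w, fst (snd w)) * p k (fst w) (fst (snd w)) \<partial>P)"
      using p_cond A by blast
    also have "\<dots> = (\<integral>w. ?h w z \<partial>P)"
      by (rule Bochner_Integration.integral_cong) (auto simp: A_def indicator_def)
    finally show "(\<integral>w. ?f w z \<partial>P) = (\<integral>w. ?h w z \<partial>P)" .
  qed
  then show ?thesis
    using PZ.integral_snd[OF i1] PZ.integral_snd[OF i2] by (simp add: case_prod_beta')
qed

lemma sets_Q: "Measurable.pred (P \<Otimes>\<^sub>M Z) R \<Longrightarrow> {q \<in> space (P \<Otimes>\<^sub>M Z). R q} \<in> sets (P \<Otimes>\<^sub>M Z)"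
  by measurable

lemma pred_rate_eq: "pred_rate P Z g k s =
   (\<integral>q. (if g (fst (fst q)) (fst (snd (fst q))) (snd q) = k \<and> fst (snd (fst q)) = s then 1 else 0) \<partial>(P \<Otimes>\<^sub>M Z)) / piS P s"
proof -
  have e: "{(w, z) \<in> space (P \<Otimes>\<^sub>M Z). g (fst w) (fst (snd w)) z = k \<and> fst (snd w) = s}
     = {q \<in> space (P \<Otimes>\<^sub>M Z). g (fst (fst q)) (fst (snd (fst q))) (snd q) = k \<and> fst (snd (fst q)) = s}"
    by auto
  show ?thesis unfolding pred_rate_def e
    by (subst measure_Collect_int[OF PZ.finite_measure_axioms]) (auto intro!: sets_Q)
qed

lemma rrisk_eq: "rrisk P Z g = 1 - (\<integral>q. p (g (fst (fst q)) (fst (snd (fst q))) (snd q)) (fst (fst q)) (fst (snd (fst q))) \<partial>(P \<Otimes>\<^sub>M Z))"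
proof -
  let ?G = "\<lambda>q. g (fst (fst q)) (fst (snd (fst q))) (snd q)"
  let ?Y = "\<lambda>q. snd (snd (fst q))"
  let ?pk = "\<lambda>k q. p k (fst (fst q)) (fst (snd (fst q)))"
  have e: "{(w, z) \<in> space (P \<Otimes>\<^sub>M Z). g (fst w) (fst (snd w)) z \<noteq> snd (snd w)}
     = {q \<in> space (P \<Otimes>\<^sub>M Z). ?G q \<noteq> ?Y q}" by auto
  have "rrisk P Z g = (\<integral>q. (if ?G q \<noteq> ?Y q then 1 else 0) \<partial>(P \<Otimes>\<^sub>M Z))"
    unfolding rrisk_def e
    by (subst measure_Collect_int[OF PZ.finite_measure_axioms]) (auto intro!: sets_Q)
  also have "\<dots> = (\<integral>q. 1 - (\<Sum>k\<in>{1..K}. (if ?G q = k \<and> ?Y q = k then 1 else 0)) \<partial>(P \<Otimes>\<^sub>M Z))"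
  proof (rule Bochner_Integration.integral_cong[OF refl])
    fix q
    have "(\<Sum>k\<in>{1..K}. (if ?G q = k \<and> ?Y q = k then 1 else (0::real))) = (if ?G q = ?Y q then 1 else 0)"
    proof -
      have "(\<Sum>k\<in>{1..K}. (if ?G q = k \<and> ?Y q = k then 1 else (0::real))) = (\<Sum>k\<in>{1..K}. (if k = ?G q then (if ?G q = ?Y q then 1 else 0) else (0::real)))"
        by (rule sum.cong) auto
      also have "\<dots> = (if ?G q = ?Y q then 1 else 0)" using gr by (simp add: sum.delta')
      finally show ?thesis .
    qed
    then show "(if ?G q \<noteq> ?Y q then 1 else (0::real)) = 1 - (\<Sum>k\<in>{1..K}. (if ?G q = k \<and> ?Y q = k then 1 else 0))" by simp
  qed
  also have "\<dots> = 1 - (\<Sum>k\<in>{1..K}. (\<integral>q. (if ?G q = k \<and> ?Y q = k then 1 else 0) \<partial>(P \<Otimes>\<^sub>M Z)))"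
    apply (subst Bochner_Integration.integral_diff)
      apply (auto intro!: ind_int simp: PZ.prob_space)[2]
    apply (subst Bochner_Integration.integral_sum)
     apply (auto intro!: ind_int simp: PZ.prob_space)
    done
  also have "\<dots> = 1 - (\<Sum>k\<in>{1..K}. (\<integral>q. (if ?G q = k then ?pk k q else 0) \<partial>(P \<Otimes>\<^sub>M Z)))"
    by (simp add: gY_eq)
  also have "\<dots> = 1 - (\<integral>q. (\<Sum>k\<in>{1..K}. (if ?G q = k then ?pk k q else 0)) \<partial>(P \<Otimes>\<^sub>M Z))"
    using p_range
    by (subst Bochner_Integration.integral_sum) (auto intro!: int_bdd[where B=1] PZ.finite_measure_axioms)
  also have "\<dots> = 1 - (\<integral>q. ?pk (?G q) q \<partial>(P \<Otimes>\<^sub>M Z))"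
  proof -
    have "(\<Sum>k\<in>{1..K}. (if ?G q = k then ?pk k q else 0)) = ?pk (?G q) q" for q
    proof -
      have "(\<Sum>k\<in>{1..K}. (if ?G q = k then ?pk k q else 0)) = (\<Sum>k\<in>{1..K}. (if k = ?G q then ?pk (?G q) q else 0))"
        by (rule sum.cong) auto
      then show ?thesis using gr by (simp add: sum.delta')
    qed
    then show ?thesis
      by (intro arg_cong[where f="\<lambda>h. 1 - integral\<^sup>L (P \<Otimes>\<^sub>M Z) h"] ext)
  qed
  finally show ?thesis .
qed

lemma lam_term: "(\<Sum>k\<in>{1..K}. lam k * (pred_rate P Z g k 1 - pred_rate P Z g k (-1)))
   = (\<integral>q. (if fst (snd (fst q)) \<in> {-1,1} then of_int (fst (snd (fst q))) * lam (g (fst (fst q)) (fst (snd (fst q))) (snd q)) / piS P (fst (snd (fst q))) else 0) \<partial>(P \<Otimes>\<^sub>M Z))"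
proof -
  let ?G = "\<lambda>q. g (fst (fst q)) (fst (snd (fst q))) (snd q)"
  let ?S = "\<lambda>q. fst (snd (fst q))"
  let ?A = "\<lambda>k s q. (if ?G q = k \<and> ?S q = s then 1 else (0::real))"
  have iA: "integrable (P \<Otimes>\<^sub>M Z) (?A k s)" for k s by (intro ind_int) measurable
  have "(\<Sum>k\<in>{1..K}. lam k * (pred_rate P Z g k 1 - pred_rate P Z g k (-1)))
      = (\<Sum>k\<in>{1..K}. lam k * ((\<integral>q. ?A k 1 q \<partial>(P \<Otimes>\<^sub>M Z)) / piS P 1 - (\<integral>q. ?A k (-1) q \<partial>(P \<Otimes>\<^sub>M Z)) / piS P (-1)))"
    by (simp add: pred_rate_eq)
  also have "\<dots> = (\<Sum>k\<in>{1..K}. (\<integral>q. lam k * (?A k 1 q / piS P 1 - ?A k (-1) q / piS P (-1)) \<partial>(P \<Otimes>\<^sub>M Z)))"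
    using iA by (simp add: Bochner_Integration.integral_diff)
  also have "\<dots> = (\<integral>q. (\<Sum>k\<in>{1..K}. lam k * (?A k 1 q / piS P 1 - ?A k (-1) q / piS P (-1))) \<partial>(P \<Otimes>\<^sub>M Z))"
    using iA by (subst Bochner_Integration.integral_sum) auto
  also have "\<dots> = (\<integral>q. (if ?S q \<in> {-1,1} then of_int (?S q) * lam (?G q) / piS P (?S q) else 0) \<partial>(P \<Otimes>\<^sub>M Z))"
  proof (rule Bochner_Integration.integral_cong[OF refl])
    fix q
    have "(\<Sum>k\<in>{1..K}. lam k * (?A k 1 q / piS P 1 - ?A k (-1) q / piS P (-1)))
        = (\<Sum>k\<in>{1..K}. (if k = ?G q then lam (?G q) * ((if ?S q = 1 then 1 else 0) / piS P 1 - (if ?S q = -1 then 1 else 0) / piS P (-1)) else 0))"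
      by (rule sum.cong) auto
    also have "\<dots> = lam (?G q) * ((if ?S q = 1 then 1 else 0) / piS P 1 - (if ?S q = -1 then 1 else 0) / piS P (-1))"
      using gr by (simp add: sum.delta')
    also have "\<dots> = (if ?S q \<in> {-1,1} then of_int (?S q) * lam (?G q) / piS P (?S q) else 0)"
      by auto
    finally show "(\<Sum>k\<in>{1..K}. lam k * (?A k 1 q / piS P 1 - ?A k (-1) q / piS P (-1))) = (if ?S q \<in> {-1,1} then of_int (?S q) * lam (?G q) / piS P (?S q) else 0)" .
  qed
  finally show ?thesis .
qed

lemma rfrisk_eq_int: "rfrisk P Z K lam g = 1 - (\<integral>q. Phi lam (fst q) (g (fst (fst q)) (fst (snd (fst q))) (snd q)) \<partial>(P \<Otimes>\<^sub>M Z)) \<and> integrable (P \<Otimes>\<^sub>M Z) (\<lambda>q. Phi lam (fst q) (g (fst (fst q)) (fst (snd (fst q))) (snd q)))"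
proof -
  let ?G = "\<lambda>q. g (fst (fst q)) (fst (snd (fst q))) (snd q)"
  let ?S = "\<lambda>q. fst (snd (fst q))"
  let ?L = "\<lambda>q. (if ?S q \<in> {-1,1} then of_int (?S q) * lam (?G q) / piS P (?S q) else 0)"
  let ?pG = "\<lambda>q. p (?G q) (fst (fst q)) (?S q)"
  have mL: "?L \<in> borel_measurable (P \<Otimes>\<^sub>M Z)"
  proof -
    show ?thesis
      by (rule meas_count_fun2[where h="\<lambda>k s. (if s \<in> {-1,1} then of_int s * lam k / piS P s else 0)", OF gmQ mSQ])
  qed
  have iL: "integrable (P \<Otimes>\<^sub>M Z) ?L"
  proof -
    let ?B = "(\<Sum>k\<in>{1..K}. \<bar>lam k\<bar>) * (1 / piS P 1 + 1 / piS P (-1))"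
    show ?thesis
    proof (rule int_bdd[where B="?B"])
      show "finite_measure (P \<Otimes>\<^sub>M Z)" by (rule PZ.finite_measure_axioms)
      show "?L \<in> borel_measurable (P \<Otimes>\<^sub>M Z)" by (rule mL)
      fix q
      have lb: "\<bar>lam (?G q)\<bar> \<le> (\<Sum>k\<in>{1..K}. \<bar>lam k\<bar>)"
        using gr by (intro member_le_sum) auto
      have p1: "piS P 1 > 0" "piS P (-1) > 0" using pi_pos by auto
      show "\<bar>?L q\<bar> \<le> ?B"
      proof (cases "?S q = 1")
        case True
        have "\<bar>?L q\<bar> = \<bar>lam (?G q)\<bar> / piS P 1" using True p1 by (simp add: abs_divide)
        also have "\<dots> \<le> (\<Sum>k\<in>{1..K}. \<bar>lam k\<bar>) / piS P 1" using lb p1 by (simp add: divide_right_mono)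
        also have "\<dots> \<le> ?B" using p1 by (simp add: field_simps sum_nonneg)
        finally show ?thesis .
      next
        case False
        show ?thesis
        proof (cases "?S q = -1")
          case True
          have "\<bar>?L q\<bar> = \<bar>lam (?G q)\<bar> / piS P (-1)" using True p1 by (simp add: abs_divide)
          also have "\<dots> \<le> (\<Sum>k\<in>{1..K}. \<bar>lam k\<bar>) / piS P (-1)" using lb p1 by (simp add: divide_right_mono)
          also have "\<dots> \<le> ?B" using p1 by (simp add: field_simps sum_nonneg)
          finally show ?thesis .
        next
          case False
          then have "?L q = 0" using \<open>?S q \<noteq> 1\<close> by auto
          then show ?thesis using p1 by (simp add: sum_nonneg)
        qed
      qed
    qed
  qed
  have ip: "integrable (P \<Otimes>\<^sub>M Z) ?pG"
  proof -
    have eqq: "?pG = (\<lambda>q. \<Sum>k\<in>{1..K}. (if ?G q = k then p k (fst (fst q)) (?S q) else 0))"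
    proof
      fix q show "?pG q = (\<Sum>k\<in>{1..K}. (if ?G q = k then p k (fst (fst q)) (?S q) else 0))"
        using gr[of "fst (fst q)" "?S q" "snd q"] sum.delta'[of "{1..K}" "?G q" "\<lambda>k. p k (fst (fst q)) (?S q)"]
        by (simp only: finite_atLeastAtMost if_True)
    qed
    show ?thesis unfolding eqq
      using p_range by (intro Bochner_Integration.integrable_sum int_bdd[where B=1] PZ.finite_measure_axioms) auto
  qed
  have "rfrisk P Z K lam g = 1 - (\<integral>q. ?pG q \<partial>(P \<Otimes>\<^sub>M Z)) + (\<integral>q. ?L q \<partial>(P \<Otimes>\<^sub>M Z))"
    unfolding rfrisk_def rrisk_eq lam_term by simp
  also have "\<dots> = 1 - (\<integral>q. ?pG q - ?L q \<partial>(P \<Otimes>\<^sub>M Z))"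
    using ip iL by (simp add: Bochner_Integration.integral_diff)
  also have eqP: "(\<lambda>q. ?pG q - ?L q) = (\<lambda>q. Phi lam (fst q) (?G q))"
    by (simp add: Phi_def)
  finally have "rfrisk P Z K lam g = 1 - (\<integral>q. Phi lam (fst q) (?G q) \<partial>(P \<Otimes>\<^sub>M Z))" .
  moreover have "integrable (P \<Otimes>\<^sub>M Z) (\<lambda>q. Phi lam (fst q) (?G q))"
    unfolding eqP[symmetric] using ip iL by simp
  ultimately show ?thesis by simp
qed

lemma rfrisk_eq: "rfrisk P Z K lam g = 1 - (\<integral>q. Phi lam (fst q) (g (fst (fst q)) (fst (snd (fst q))) (snd q)) \<partial>(P \<Otimes>\<^sub>M Z))"
  using rfrisk_eq_int by blast
lemma int_PhiG: "integrable (P \<Otimes>\<^sub>M Z) (\<lambda>q. Phi lam (fst q) (g (fst (fst q)) (fst (snd (fst q))) (snd q)))"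
  using rfrisk_eq_int by blast

lemma Q_S: "(\<integral>q. (if fst (snd (fst q)) = s then 1 else 0) \<partial>(P \<Otimes>\<^sub>M Z)) = piS P s"
proof -
  let ?f = "\<lambda>w (z::'z). (if fst (snd w) = s then 1 else (0::real))"
  have i: "integrable (P \<Otimes>\<^sub>M Z) (case_prod ?f)"
    by (intro int_bdd[where B=1]) (auto intro: PZ.finite_measure_axioms simp: case_prod_beta')
  have "(\<integral>z. (\<integral>w. ?f w z \<partial>P) \<partial>Z) = piS P s"
    by (simp add: piS_eq ZZ.prob_space)
  then show ?thesis using PZ.integral_snd[OF i] by (simp add: case_prod_beta')
qed

lemma pred_rate_sum: "s \<in> {-1,1} \<Longrightarrow> (\<Sum>k\<in>{1..K}. pred_rate P Z g k s) = 1"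
proof -
  assume s: "s \<in> {-1,1}"
  let ?G = "\<lambda>q. g (fst (fst q)) (fst (snd (fst q))) (snd q)"
  let ?S = "\<lambda>q. fst (snd (fst q))"
  have "(\<Sum>k\<in>{1..K}. pred_rate P Z g k s) = (\<Sum>k\<in>{1..K}. (\<integral>q. (if ?G q = k \<and> ?S q = s then 1 else 0) \<partial>(P \<Otimes>\<^sub>M Z))) / piS P s"
    by (simp add: pred_rate_eq sum_divide_distrib)
  also have "\<dots> = (\<integral>q. (\<Sum>k\<in>{1..K}. (if ?G q = k \<and> ?S q = s then 1 else 0)) \<partial>(P \<Otimes>\<^sub>M Z)) / piS P s"
    by (subst Bochner_Integration.integral_sum) (auto intro!: ind_int)
  also have "(\<lambda>q. (\<Sum>k\<in>{1..K}. (if ?G q = k \<and> ?S q = s then 1 else (0::real)))) = (\<lambda>q. if ?S q = s then 1 else 0)"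
  proof
    fix q
    have "(\<Sum>k\<in>{1..K}. (if ?G q = k \<and> ?S q = s then 1 else (0::real))) = (\<Sum>k\<in>{1..K}. (if ?G q = k then (if ?S q = s then 1 else 0) else (0::real)))"
      by (rule sum.cong) auto
    also have "\<dots> = (if ?S q = s then 1 else 0)"
      using gr[of "fst (fst q)" "?S q" "snd q"] sum.delta'[of "{1..K}" "?G q" "\<lambda>k. (if ?S q = s then 1 else (0::real))"]
      by (simp only: finite_atLeastAtMost if_True)
    finally show "(\<Sum>k\<in>{1..K}. (if ?G q = k \<and> ?S q = s then 1 else (0::real))) = (if ?S q = s then 1 else 0)" .
  qed
  also have "(\<integral>q. (if ?S q = s then 1 else 0) \<partial>(P \<Otimes>\<^sub>M Z)) / piS P s = 1"
    using Q_S pi_pos'[OF s] by simp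
  finally show ?thesis .
qed

lemma pred_rate_bnd: "s \<in> {-1,1} \<Longrightarrow> 0 \<le> pred_rate P Z g k s \<and> pred_rate P Z g k s \<le> 1"
proof -
  assume s: "s \<in> {-1,1}"
  let ?G = "\<lambda>q. g (fst (fst q)) (fst (snd (fst q))) (snd q)"
  let ?S = "\<lambda>q. fst (snd (fst q))"
  have ps: "piS P s > 0" using pi_pos' s by simp
  have a: "0 \<le> (\<integral>q. (if ?G q = k \<and> ?S q = s then 1 else (0::real)) \<partial>(P \<Otimes>\<^sub>M Z))"
    by (intro Bochner_Integration.integral_nonneg) simp
  have b: "(\<integral>q. (if ?G q = k \<and> ?S q = s then 1 else (0::real)) \<partial>(P \<Otimes>\<^sub>M Z)) \<le> (\<integral>q. (if ?S q = s then 1 else (0::real)) \<partial>(P \<Otimes>\<^sub>M Z))"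
    by (rule integral_mono) (auto intro!: ind_int)
  show ?thesis using a b ps unfolding pred_rate_eq Q_S by (simp add: divide_le_eq_1)
qed

lemma runfair_bnd: "k \<in> {1..K} \<Longrightarrow> \<bar>pred_rate P Z g k 1 - pred_rate P Z g k (-1)\<bar> \<le> runfair P Z K g"
  unfolding runfair_def by (rule Max_ge) auto

lemma runfair_le1: "runfair P Z K g \<le> 1"
proof -
  have h: "\<bar>pred_rate P Z g k 1 - pred_rate P Z g k (-1)\<bar> \<le> 1" for k
    using pred_rate_bnd[of 1 k] pred_rate_bnd[of "-1" k] by (auto simp: abs_le_iff)
  show ?thesis unfolding runfair_def using K_pos h by (subst Max_le_iff) auto
qed

lemma lam_diff_bound:
  fixes c :: "nat \<Rightarrow> real"
  assumes D: "\<And>k. k \<in> {1..K} \<Longrightarrow> \<bar>c k - c 1\<bar> \<le> D"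
  shows "(\<Sum>k\<in>{1..K}. c k * (pred_rate P Z g k 1 - pred_rate P Z g k (-1))) \<le> real K * D * runfair P Z K g"
proof -
  let ?d = "\<lambda>k. pred_rate P Z g k 1 - pred_rate P Z g k (-1)"
  have s0: "(\<Sum>k\<in>{1..K}. ?d k) = 0"
    using pred_rate_sum[of 1] pred_rate_sum[of "-1"] by (simp add: sum_subtractf)
  have "(\<Sum>k\<in>{1..K}. c k * ?d k) = (\<Sum>k\<in>{1..K}. (c k - c 1) * ?d k)"
  proof -
    have "(\<Sum>k\<in>{1..K}. (c k - c 1) * ?d k) = (\<Sum>k\<in>{1..K}. c k * ?d k) - c 1 * (\<Sum>k\<in>{1..K}. ?d k)"
      by (simp add: left_diff_distrib sum_subtractf sum_distrib_left[symmetric])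
    then show ?thesis using s0 by simp
  qed
  also have "\<dots> \<le> (\<Sum>k\<in>{1..K}. D * runfair P Z K g)"
  proof (rule sum_mono)
    fix k assume k: "k \<in> {1..K}"
    have "(c k - c 1) * ?d k \<le> \<bar>c k - c 1\<bar> * \<bar>?d k\<bar>" by (simp add: abs_mult[symmetric])
    also have "\<dots> \<le> D * runfair P Z K g"
      using D[OF k] runfair_bnd[OF k] by (intro mult_mono) auto
    finally show "(c k - c 1) * ?d k \<le> D * runfair P Z K g" .
  qed
  also have "\<dots> = real K * D * runfair P Z K g" by simp
  finally show ?thesis .
qed

end

end


lemma meas_argmaxK:
  fixes K :: nat and F :: "'a \<Rightarrow> nat \<Rightarrow> real"
  assumes A: "\<And>k. k \<in> {1..K} \<Longrightarrow> (\<lambda>t. F t k) \<in> borel_measurable M"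
  shows "(\<lambda>t. argmaxK K (F t)) \<in> M \<rightarrow>\<^sub>M count_space UNIV"
proof -
  have *: "(\<lambda>t. argmaxK K (F t)) = (\<lambda>t. LEAST k. k \<in> {1..K} \<and> (\<forall>j\<in>{1..K}. F t j \<le> F t k))"
    by (simp add: argmaxK_def)
  have m: "(\<lambda>t. k \<in> {1..K} \<and> (\<forall>j\<in>{1..K}. F t j \<le> F t k)) \<in> M \<rightarrow>\<^sub>M count_space UNIV" for k
  proof (cases "k \<in> {1..K}")
    case True
    have "Measurable.pred M (\<lambda>t. \<forall>j\<in>{1..K}. F t j \<le> F t k)"
    proof (rule pred_intros_finite(3))
      fix j assume j: "j \<in> {1..K}"
      show "Measurable.pred M (\<lambda>t. F t j \<le> F t k)"
        unfolding pred_def by (rule borel_measurable_le[OF A[OF j] A[OF True]])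
    next
      show "finite {1..K}" by simp
    qed
    then show ?thesis using True by simp
  next
    case False
    then have "(\<lambda>t. k \<in> {1..K} \<and> (\<forall>j\<in>{1..K}. F t j \<le> F t k)) = (\<lambda>t. False)" by auto
    then show ?thesis by simp
  qed
  show ?thesis unfolding * using measurable_Least[OF m] .
qed

lemma Max_div:
  fixes f :: "'a \<Rightarrow> real"
  assumes "finite A" "A \<noteq> {}" "c > 0"
  shows "Max (f ` A) / c = Max ((\<lambda>k. f k / c) ` A)"
proof -
  have "mono (\<lambda>x::real. x / c)" using assms(3) by (intro monoI) (simp add: divide_right_mono)
  from mono_Max_commute[OF this, of "f ` A"] assms show ?thesis by (simp add: image_image)
qed

lemma Max_abs_le_sum:
  fixes f :: "'a \<Rightarrow> real"
  assumes "finite A" "A \<noteq> {}"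
  shows "\<bar>Max (f ` A)\<bar> \<le> (\<Sum>k\<in>A. \<bar>f k\<bar>)"
proof -
  have "Max (f ` A) \<in> f ` A" using assms by auto
  then obtain k where k: "k \<in> A" "Max (f ` A) = f k" by auto
  have "\<bar>f k\<bar> \<le> (\<Sum>k\<in>A. \<bar>f k\<bar>)" using assms k by (intro member_le_sum) auto
  then show ?thesis using k by simp
qed

lemma argmaxK_prop:
  assumes "K \<ge> 1"
  shows "argmaxK K f \<in> {1..K} \<and> (\<forall>j\<in>{1..K}. f j \<le> f (argmaxK K f))"
proof -
  have "Max (f ` {1..K}) \<in> f ` {1..K}" using assms by auto
  then obtain k where k: "k \<in> {1..K}" "Max (f ` {1..K}) = f k" by auto
  have "k \<in> {1..K} \<and> (\<forall>j\<in>{1..K}. f j \<le> f k)" using k by (metis Max_ge finite_atLeastAtMost finite_imageI image_eqI)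
  then show ?thesis unfolding argmaxK_def by (rule LeastI)
qed

context fsetup
begin

interpretation PP: prob_space P by (rule P_prob)

definition MPhi :: "(nat \<Rightarrow> real) \<Rightarrow> 'x \<times> int \<times> nat \<Rightarrow> real" where
  "MPhi lam w = (if fst (snd w) \<in> {-1,1} then Max ((\<lambda>k. Phi lam w k) ` {1..K}) else 0)"

lemma mPhi[measurable]: "(\<lambda>w. Phi lam w k) \<in> borel_measurable P"
proof -
  have h: "(\<lambda>w. (\<lambda>s. (if s \<in> {-1,1} then of_int s * lam k / piS P s else 0)) (fst (snd w))) \<in> borel_measurable P"
    using measurable_compose[OF mS, of "\<lambda>s. (if s \<in> {-1,1} then of_int s * lam k / piS P s else 0)" borel] by simp
  have "(\<lambda>w. Phi lam w k) = (\<lambda>w. p k (fst w) (fst (snd w)) - (\<lambda>s. (if s \<in> {-1,1} then of_int s * lam k / piS P s else 0)) (fst (snd w)))"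
    by (simp add: Phi_def fun_eq_iff)
  then show ?thesis using borel_measurable_diff[OF mp h] by simp
qed

lemma mMPhi[measurable]: "MPhi lam \<in> borel_measurable P"
proof -
  have [measurable]: "(\<lambda>w. Max ((\<lambda>k. Phi lam w k) ` {1..K})) \<in> borel_measurable P"
    by (rule borel_measurable_Max) auto
  have [measurable]: "Measurable.pred P (\<lambda>w. fst (snd w) \<in> {-1,1})"
    using measurable_compose[OF mS, of "\<lambda>s. s \<in> {-1,1::int}" "count_space UNIV"] by simp
  show ?thesis unfolding MPhi_def by measurable
qed

definition Bl :: "(nat \<Rightarrow> real) \<Rightarrow> real" where
  "Bl lam = (\<Sum>k\<in>{1..K}. 1 + \<bar>lam k\<bar> * (1 / piS P 1 + 1 / piS P (-1)))"

lemma Phi_bnd: "k \<in> {1..K} \<Longrightarrow> \<bar>Phi lam w k\<bar> \<le> Bl lam"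
proof -
  assume k: "k \<in> {1..K}"
  have p1: "piS P 1 > 0" "piS P (-1) > 0" using pi_pos by auto
  have "\<bar>Phi lam w k\<bar> \<le> 1 + \<bar>lam k\<bar> * (1 / piS P 1 + 1 / piS P (-1))"
  proof -
    have a: "\<bar>p k (fst w) (fst (snd w))\<bar> \<le> 1" using p_range by (simp add: abs_le_iff)
    have b: "\<bar>(if fst (snd w) \<in> {-1,1} then of_int (fst (snd w)) * lam k / piS P (fst (snd w)) else 0)\<bar> \<le> \<bar>lam k\<bar> * (1 / piS P 1 + 1 / piS P (-1))"
      using p1 by (auto simp: abs_mult abs_divide field_simps)
    show ?thesis unfolding Phi_def using a b by (smt (verit))
  qed
  also have "\<dots> \<le> Bl lam" unfolding Bl_def using k p1
    by (intro member_le_sum) (auto intro!: add_nonneg_nonneg mult_nonneg_nonneg)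
  finally show ?thesis .
qed

lemma MPhi_bnd: "\<bar>MPhi lam w\<bar> \<le> real K * Bl lam"
proof -
  have "\<bar>Max ((\<lambda>k. Phi lam w k) ` {1..K})\<bar> \<le> (\<Sum>k\<in>{1..K}. \<bar>Phi lam w k\<bar>)"
    using K_pos by (intro Max_abs_le_sum) auto
  also have "\<dots> \<le> (\<Sum>k\<in>{1..K}. Bl lam)" by (intro sum_mono Phi_bnd) auto
  finally have "\<bar>Max ((\<lambda>k. Phi lam w k) ` {1..K})\<bar> \<le> real K * Bl lam" by simp
  moreover have "0 \<le> real K * Bl lam" using calculation by linarith
  ultimately show ?thesis unfolding MPhi_def by auto
qed

lemma int_MPhi: "integrable P (MPhi lam)"
  by (rule int_bdd[OF PP.finite_measure_axioms mMPhi MPhi_bnd])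

lemma fair_obj_eq: "fair_obj P p K lam = (\<integral>w. MPhi lam w \<partial>P)"
proof -
  let ?F = "\<lambda>s w. (if fst (snd w) = s then Max ((\<lambda>k. piS P s * p k (fst w) (fst (snd w)) - of_int s * lam k) ` {1..K}) else 0)"
  have mF: "?F s \<in> borel_measurable P" for s by measurable
  have bF: "\<bar>?F s w / piS P s\<bar> \<le> real K * Bl lam" if s: "s \<in> {-1,1}" for s and w :: "'x \<times> int \<times> nat"
  proof (cases "fst (snd w) = s")
    case True
    have ps: "piS P s > 0" using pi_pos' s by simp
    have "?F s w / piS P s = Max ((\<lambda>k. (piS P s * p k (fst w) (fst (snd w)) - of_int s * lam k) / piS P s) ` {1..K})"
      using True K_pos ps by (simp add: Max_div)
    also have "\<dots> = MPhi lam w"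
    proof -
      have E: "(\<lambda>k. (piS P s * p k (fst w) (fst (snd w)) - of_int s * lam k) / piS P s) = (\<lambda>k. Phi lam w k)"
        using True ps s by (auto simp: Phi_def field_simps)
      show ?thesis unfolding E using True s by (simp add: MPhi_def)
    qed
    finally show ?thesis using MPhi_bnd by simp
  next
    case False
    then show ?thesis using MPhi_bnd[of lam w] by simp
  qed
  have iF: "integrable P (\<lambda>w. ?F s w / piS P s)" if "s \<in> {-1,1}" for s
    using bF[OF that] by (intro int_bdd[OF PP.finite_measure_axioms, where B="real K * Bl lam"]) (auto intro!: borel_measurable_divide mF)
  have "fair_obj P p K lam = (\<Sum>s\<in>{-1,1::int}. (\<integral>w. ?F s w \<partial>P) / piS P s)"
    unfolding fair_obj_def
    by (intro sum.cong refl arg_cong2[where f="(/)"] Bochner_Integration.integral_cong) auto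
  also have "\<dots> = (\<Sum>s\<in>{-1,1::int}. (\<integral>w. ?F s w / piS P s \<partial>P))" by simp
  also have "\<dots> = (\<integral>w. (\<Sum>s\<in>{-1,1::int}. ?F s w / piS P s) \<partial>P)"
    using iF by (subst Bochner_Integration.integral_sum) auto
  also have "\<dots> = (\<integral>w. MPhi lam w \<partial>P)"
  proof (rule Bochner_Integration.integral_cong[OF refl])
    fix w
    show "(\<Sum>s\<in>{-1,1::int}. ?F s w / piS P s) = MPhi lam w"
    proof (cases "fst (snd w) \<in> {-1,1}")
      case True
      define s where "s = fst (snd w)"
      have s: "s \<in> {-1,1}" using True s_def by simp
      have ps: "piS P s > 0" using pi_pos' s by simp
      have "(\<Sum>s'\<in>{-1,1::int}. ?F s' w / piS P s') = ?F s w / piS P s"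
        using s s_def by auto
      also have "\<dots> = Max ((\<lambda>k. (piS P s * p k (fst w) (fst (snd w)) - of_int s * lam k) / piS P s) ` {1..K})"
        using K_pos ps s_def by (simp add: Max_div)
      also have "(\<lambda>k. (piS P s * p k (fst w) (fst (snd w)) - of_int s * lam k) / piS P s) = (\<lambda>k. Phi lam w k)"
        using ps s s_def by (auto simp: Phi_def field_simps)
      finally show ?thesis using True by (simp add: MPhi_def)
    next
      case False
      then show ?thesis by (auto simp: MPhi_def)
    qed
  qed
  finally show ?thesis .
qed

lemma fair_obj_ge: "i \<in> {1..K} \<Longrightarrow> j \<in> {1..K} \<Longrightarrow> lam j - lam i \<le> fair_obj P p K lam"
proof -
  assume i: "i \<in> {1..K}" and j: "j \<in> {1..K}"
  have p1: "piS P 1 > 0" "piS P (-1) > 0" using pi_pos by auto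
  let ?h = "\<lambda>w. (- lam i / piS P 1) * (if fst (snd w) = 1 then 1 else 0) + (lam j / piS P (-1)) * (if fst (snd w) = -1 then 1 else 0)"
  have ih: "integrable P (\<lambda>w. (if fst (snd w) = s then 1 else (0::real)))" for s
    by (intro int_bdd[OF PP.finite_measure_axioms, where B=1]) auto
  have e1: "(\<integral>w. ?h w \<partial>P) = lam j - lam i"
  proof -
    have "(\<integral>w. ?h w \<partial>P) = (- lam i / piS P 1) * (\<integral>w. (if fst (snd w) = 1 then 1 else 0) \<partial>P) + (lam j / piS P (-1)) * (\<integral>w. (if fst (snd w) = -1 then 1 else 0) \<partial>P)"
      using ih by (simp add: Bochner_Integration.integral_add)
    also have "\<dots> = (- lam i / piS P 1) * piS P 1 + (lam j / piS P (-1)) * piS P (-1)"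
      by (simp only: piS_eq[symmetric])
    also have "\<dots> = lam j - lam i" using p1 by simp
    finally show ?thesis .
  qed
  have e2: "(\<integral>w. ?h w \<partial>P) \<le> (\<integral>w. MPhi lam w \<partial>P)"
  proof (rule integral_mono)
    show "integrable P ?h" using ih by auto
    show "integrable P (MPhi lam)" by (rule int_MPhi)
    fix w
    show "?h w \<le> MPhi lam w"
    proof (cases "fst (snd w) = 1")
      case True
      have "?h w = - lam i / piS P 1" using True by simp
      also have "\<dots> \<le> Phi lam w i" using True p_range by (simp add: Phi_def)
      also have "\<dots> \<le> MPhi lam w" using True i by (simp add: MPhi_def)
      finally show ?thesis .
    next
      case F1: False
      show ?thesis
      proof (cases "fst (snd w) = -1")
        case True
        have "?h w = lam j / piS P (-1)" using True by simp
        also have "\<dots> \<le> Phi lam w j" using True p_range by (simp add: Phi_def)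
        also have "\<dots> \<le> MPhi lam w" using True j by (simp add: MPhi_def)
        finally show ?thesis .
      next
        case False
        then show ?thesis using F1 by (simp add: MPhi_def)
      qed
    qed
  qed
  show ?thesis using e1 e2 by (simp add: fair_obj_eq)
qed

lemma fair_obj_0: "fair_obj P p K (\<lambda>_. 0) \<le> 1"
proof -
  have "(\<integral>w. MPhi (\<lambda>_. 0) w \<partial>P) \<le> 1"
  proof (rule PP.integral_le_const[OF int_MPhi], rule AE_I2)
    fix w
    have "Max ((\<lambda>k. Phi (\<lambda>_. 0) w k) ` {1..K}) \<le> 1"
      using K_pos p_range by (subst Max_le_iff) (auto simp: Phi_def)
    then show "MPhi (\<lambda>_. 0) w \<le> 1" by (simp add: MPhi_def)
  qed
  then show ?thesis by (simp add: fair_obj_eq)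
qed

lemma intQ_fst:
  fixes h :: "'x \<times> int \<times> nat \<Rightarrow> real"
  assumes "prob_space Z" "h \<in> borel_measurable P"
  shows "(\<integral>q. h (fst q) \<partial>(P \<Otimes>\<^sub>M Z)) = (\<integral>w. h w \<partial>P)"
proof -
  have "integral\<^sup>L (distr (P \<Otimes>\<^sub>M Z) P fst) h = (\<integral>q. h (fst q) \<partial>(P \<Otimes>\<^sub>M Z))"
    by (rule integral_distr) (auto simp: assms)
  then show ?thesis using prob_space.distr_pair_fst[OF assms(1), of P] by simp
qed

lemma AEQ_fst:
  assumes "prob_space Z" "AE w in P. R w"
  shows "AE q in P \<Otimes>\<^sub>M Z. R (fst q)"
  using AE_distrD[of fst "P \<Otimes>\<^sub>M Z" P R] prob_space.distr_pair_fst[OF assms(1), of P] assms(2)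
  by (metis measurable_fst)

lemma mXSs[measurable]: "snd \<in> XS_space \<rightarrow>\<^sub>M count_space UNIV"
  unfolding XS_space_def by measurable

lemma m_score: "(\<lambda>q. piS P (snd (fst q)) * p k (fst (fst q)) (snd (fst q)) - of_int (snd (fst q)) * lam k) \<in> borel_measurable (XS_space \<Otimes>\<^sub>M Z)"
proof -
  have a: "(\<lambda>q. p k (fst (fst q)) (snd (fst q))) \<in> borel_measurable (XS_space \<Otimes>\<^sub>M Z)"
    using measurable_compose[OF measurable_fst mpXS[of k]] by (simp add: comp_def)
  have b: "(\<lambda>q. snd (fst q)) \<in> (XS_space \<Otimes>\<^sub>M Z) \<rightarrow>\<^sub>M count_space UNIV"
    using measurable_compose[OF measurable_fst mXSs] by (simp add: comp_def)
  have c: "(\<lambda>q. piS P (snd (fst q))) \<in> borel_measurable (XS_space \<Otimes>\<^sub>M Z)"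
    using meas_count_fun2[OF b b, of "\<lambda>s t. piS P s"] by simp
  have d: "(\<lambda>q. of_int (snd (fst q)) * lam k) \<in> borel_measurable (XS_space \<Otimes>\<^sub>M Z)"
    using meas_count_fun2[OF b b, of "\<lambda>s t. of_int s * lam k"] by simp
  show ?thesis using borel_measurable_diff[OF borel_measurable_times[OF c a] d] .
qed

lemma gfair_c: "1 - fair_obj P p K lam \<le> rfrisk P Zdet K lam (\<lambda>x s _. gfair P p K lam x s)"
proof -
  have Zd: "prob_space Zdet" unfolding Zdet_def by (rule prob_space_return) simp
  let ?g = "\<lambda>x s (_::unit). gfair P p K lam x s"
  have gm: "(\<lambda>q. ?g (fst (fst q)) (snd (fst q)) (snd q)) \<in> (XS_space \<Otimes>\<^sub>M Zdet) \<rightarrow>\<^sub>M count_space UNIV"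
    unfolding gfair_def by (rule meas_argmaxK) (rule m_score)
  have gr: "\<And>x s z. ?g x s z \<in> {1..K}" unfolding gfair_def using argmaxK_prop[OF K_pos] by blast
  interpret ZD: prob_space Zdet by (rule Zd)
  interpret PZ: pair_prob_space P Zdet by unfold_locales
  have "(\<integral>q. Phi lam (fst q) (?g (fst (fst q)) (fst (snd (fst q))) (snd q)) \<partial>(P \<Otimes>\<^sub>M Zdet)) \<le> (\<integral>q. MPhi lam (fst q) \<partial>(P \<Otimes>\<^sub>M Zdet))"
  proof (rule integral_mono_AE)
    show "integrable (P \<Otimes>\<^sub>M Zdet) (\<lambda>q. Phi lam (fst q) (?g (fst (fst q)) (fst (snd (fst q))) (snd q)))"
      by (rule int_PhiG[OF Zd gm gr])
    show "integrable (P \<Otimes>\<^sub>M Zdet) (\<lambda>q. MPhi lam (fst q))"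
      by (rule int_bdd[OF PZ.finite_measure_axioms, where B="real K * Bl lam"])
         (auto intro: MPhi_bnd measurable_compose[OF measurable_fst mMPhi])
    have "AE w in P. fst (snd w) \<in> {-1,1}" using P_supp by (auto elim: AE_mp)
    from AEQ_fst[OF Zd this]
    show "AE q in P \<Otimes>\<^sub>M Zdet. Phi lam (fst q) (?g (fst (fst q)) (fst (snd (fst q))) (snd q)) \<le> MPhi lam (fst q)"
    proof (rule AE_mp, intro AE_I2 impI)
      fix q :: "('x \<times> int \<times> nat) \<times> unit"
      assume "fst (snd (fst q)) \<in> {-1,1}"
      then show "Phi lam (fst q) (?g (fst (fst q)) (fst (snd (fst q))) (snd q)) \<le> MPhi lam (fst q)"
        using gr by (simp add: MPhi_def)
    qed
  qed
  also have "\<dots> = fair_obj P p K lam" using intQ_fst[OF Zd mMPhi] by (simp add: fair_obj_eq)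
  finally show ?thesis using rfrisk_eq[OF Zd gm gr, of lam] by simp
qed

end


lemma avg_ge:
  fixes F :: "nat \<Rightarrow> real"
  assumes "finite I" "card I > 0" "\<And>i. i \<in> I \<Longrightarrow> v \<le> F i"
  shows "v \<le> (1 / real (card I)) * (\<Sum>i\<in>I. F i)"
proof -
  have "(\<Sum>i\<in>I. v) \<le> (\<Sum>i\<in>I. F i)" using assms(3) by (rule sum_mono)
  then have "real (card I) * v \<le> (\<Sum>i\<in>I. F i)" by simp
  then show ?thesis using assms(2) by (simp add: field_simps)
qed

lemma avg_le:
  fixes F :: "nat \<Rightarrow> real"
  assumes "finite I" "card I > 0" "\<And>i. i \<in> I \<Longrightarrow> F i \<le> v"
  shows "(1 / real (card I)) * (\<Sum>i\<in>I. F i) \<le> v"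
proof -
  have "(\<Sum>i\<in>I. F i) \<le> (\<Sum>i\<in>I. v)" using assms(3) by (rule sum_mono)
  then have "(\<Sum>i\<in>I. F i) \<le> real (card I) * v" by simp
  then show ?thesis using assms(2) by (simp add: field_simps)
qed

lemma pihat_bnd: "0 \<le> pihat N d' s \<and> pihat N d' s \<le> 1"
proof -
  have "Nsz N d' s \<le> N" unfolding Nsz_def
    using card_mono[of "{..<N}" "{i \<in> {..<N}. snd (d' i) = s}"] by auto
  then show ?thesis unfolding pihat_def by (cases "N = 0") (auto simp: divide_le_eq_1)
qed

lemma emp_ge:
  fixes ph :: "nat \<Rightarrow> 'x \<Rightarrow> int \<Rightarrow> real" and lam :: "nat \<Rightarrow> real"
  assumes N1: "Nsz N d' 1 > 0" and N2: "Nsz N d' (-1) > 0"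
    and nn: "\<And>s k i. s \<in> {-1,1} \<Longrightarrow> k \<in> {1..K} \<Longrightarrow> i < N \<Longrightarrow> 0 \<le> pihat N d' s * (ph k (fst (d' i)) s + z (s,k,i))"
    and i: "i \<in> {1..K}" and j: "j \<in> {1..K}"
  shows "lam j - lam i \<le> emp_obj K N ph d' z lam"
proof -
  let ?I = "\<lambda>s. {i \<in> {..<N}. snd (d' i) = s}"
  let ?M = "\<lambda>s l. Max ((\<lambda>k. pihat N d' s * (ph k (fst (d' l)) s + z (s, k, l)) - of_int s * lam k) ` {1..K})"
  have cI: "card (?I s) = Nsz N d' s" for s by (simp add: Nsz_def)
  have t1: "- lam i \<le> (1 / real (Nsz N d' 1)) * (\<Sum>l\<in>?I 1. ?M 1 l)"
    unfolding cI[symmetric]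
  proof (rule avg_ge)
    show "finite (?I 1)" by simp
    show "card (?I 1) > 0" using N1 cI by simp
    fix l assume l: "l \<in> ?I 1"
    have "- lam i \<le> pihat N d' 1 * (ph i (fst (d' l)) 1 + z (1, i, l)) - of_int 1 * lam i"
      using nn[of 1 i l] i l by simp
    also have "\<dots> \<le> ?M 1 l" using i by (intro Max_ge) auto
    finally show "- lam i \<le> ?M 1 l" .
  qed
  have t2: "lam j \<le> (1 / real (Nsz N d' (-1))) * (\<Sum>l\<in>?I (-1). ?M (-1) l)"
    unfolding cI[symmetric]
  proof (rule avg_ge)
    show "finite (?I (-1))" by simp
    show "card (?I (-1)) > 0" using N2 cI by simp
    fix l assume l: "l \<in> ?I (-1)"
    have "lam j \<le> pihat N d' (-1) * (ph j (fst (d' l)) (-1) + z (-1, j, l)) - of_int (-1) * lam j"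
      using nn[of "-1" j l] j l by simp
    also have "\<dots> \<le> ?M (-1) l" using j by (intro Max_ge) auto
    finally show "lam j \<le> ?M (-1) l" .
  qed
  have "emp_obj K N ph d' z lam = (1 / real (Nsz N d' (-1))) * (\<Sum>l\<in>?I (-1). ?M (-1) l) + (1 / real (Nsz N d' 1)) * (\<Sum>l\<in>?I 1. ?M 1 l)"
    unfolding emp_obj_def by simp
  then show ?thesis using t1 t2 by simp
qed

lemma emp_le:
  fixes ph :: "nat \<Rightarrow> 'x \<Rightarrow> int \<Rightarrow> real"
  assumes N1: "Nsz N d' 1 > 0" and N2: "Nsz N d' (-1) > 0" and K: "K \<ge> 1"
    and ph: "\<And>k x s. 0 \<le> ph k x s \<and> ph k x s \<le> 1"
    and zb: "\<And>s k i. s \<in> {-1,1} \<Longrightarrow> k \<in> {1..K} \<Longrightarrow> i < N \<Longrightarrow> 0 \<le> z (s,k,i) \<and> z (s,k,i) \<le> u"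
  shows "emp_obj K N ph d' z (\<lambda>_. 0) \<le> 2 * (1 + u)"
proof -
  let ?I = "\<lambda>s. {i \<in> {..<N}. snd (d' i) = s}"
  let ?M = "\<lambda>s l. Max ((\<lambda>k. pihat N d' s * (ph k (fst (d' l)) s + z (s, k, l)) - of_int s * 0) ` {1..K})"
  have cI: "card (?I s) = Nsz N d' s" for s by (simp add: Nsz_def)
  have t: "(1 / real (Nsz N d' s)) * (\<Sum>l\<in>?I s. ?M s l) \<le> 1 + u" if s: "s \<in> {-1,1}" and Ns: "Nsz N d' s > 0" for s
    unfolding cI[symmetric]
  proof (rule avg_le)
    show "finite (?I s)" by simp
    show "card (?I s) > 0" using Ns cI by simp
    fix l assume l: "l \<in> ?I s"
    show "?M s l \<le> 1 + u"
    proof (rule Max.boundedI)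
      show "finite ((\<lambda>k. pihat N d' s * (ph k (fst (d' l)) s + z (s, k, l)) - of_int s * 0) ` {1..K})" by simp
      show "(\<lambda>k. pihat N d' s * (ph k (fst (d' l)) s + z (s, k, l)) - of_int s * 0) ` {1..K} \<noteq> {}" using K by simp
      fix y assume "y \<in> (\<lambda>k. pihat N d' s * (ph k (fst (d' l)) s + z (s, k, l)) - of_int s * 0) ` {1..K}"
      then obtain k where k: "k \<in> {1..K}" and y: "y = pihat N d' s * (ph k (fst (d' l)) s + z (s, k, l)) - of_int s * 0" by auto
      have a: "0 \<le> pihat N d' s" "pihat N d' s \<le> 1" using pihat_bnd by auto
      have b: "0 \<le> ph k (fst (d' l)) s + z (s, k, l)" "ph k (fst (d' l)) s + z (s, k, l) \<le> 1 + u"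
        using ph[of k "fst (d' l)" s] zb[OF s k, of l] l by auto
      have "pihat N d' s * (ph k (fst (d' l)) s + z (s, k, l)) \<le> 1 * (1 + u)"
        using a b by (intro mult_mono) auto
      then show "y \<le> 1 + u" using y by simp
    qed
  qed
  have "emp_obj K N ph d' z (\<lambda>_. 0) = (1 / real (Nsz N d' (-1))) * (\<Sum>l\<in>?I (-1). ?M (-1) l) + (1 / real (Nsz N d' 1)) * (\<Sum>l\<in>?I 1. ?M 1 l)"
    unfolding emp_obj_def by simp
  then show ?thesis using t[of 1] t[of "-1"] N1 N2 by simp
qed



lemma unif_prob: "u > 0 \<Longrightarrow> prob_space (unif u)"
  unfolding unif_def by (intro prob_space_uniform_measure) auto

lemma Zf_prob: "u > 0 \<Longrightarrow> prob_space (Zfresh K u)"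
  unfolding Zfresh_def by (intro prob_space_PiM unif_prob)

lemma Zf_comp: "k \<in> {1..K} \<Longrightarrow> (\<lambda>\<zeta>. \<zeta> k) \<in> borel_measurable (Zfresh K u)"
proof -
  assume k: "k \<in> {1..K}"
  have "(\<lambda>\<zeta>. \<zeta> k) \<in> Zfresh K u \<rightarrow>\<^sub>M unif u"
    unfolding Zfresh_def using k by (rule measurable_component_singleton)
  moreover have e: "sets (uniform_measure lborel {0..u}) = sets (borel::real measure)" by simp
  ultimately show ?thesis unfolding unif_def using measurable_cong_sets[OF refl e, of "Zfresh K u"] by simp
qed

lemma unif_AE: "AE x in unif u. 0 \<le> x \<and> x \<le> u"
  unfolding unif_def by (rule AE_uniform_measureI) (auto intro!: AE_I2)

lemma Zf_AE1: "u > 0 \<Longrightarrow> k \<in> {1..K} \<Longrightarrow> AE \<zeta> in Zfresh K u. 0 \<le> \<zeta> k \<and> \<zeta> k \<le> u"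
  unfolding Zfresh_def
  apply (rule AE_PiM_component[of "{1..K}" "\<lambda>_. unif u" k "\<lambda>x. 0 \<le> x \<and> x \<le> u"])
  using unif_prob unif_AE by auto

lemma Zf_AE: "u > 0 \<Longrightarrow> AE \<zeta> in Zfresh K u. \<forall>k\<in>{1..K}. 0 \<le> \<zeta> k \<and> \<zeta> k \<le> u"
proof (rule eventually_ball_finite)
  assume u: "u > 0"
  show "finite {1..K}" by simp
  show "\<forall>k\<in>{1..K}. AE \<zeta> in Zfresh K u. 0 \<le> \<zeta> k \<and> \<zeta> k \<le> u"
    using Zf_AE1[OF u] by blast
qed

context fsetup
begin

interpretation PP: prob_space P by (rule P_prob)

lemma pt_ineq:
  fixes ph :: "nat \<Rightarrow> 'x \<Rightarrow> int \<Rightarrow> real" and lh :: "nat \<Rightarrow> real" and \<zeta> :: "nat \<Rightarrow> real"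
    and w :: "'x \<times> int \<times> nat" and N :: nat and d' :: "nat \<Rightarrow> 'x \<times> int" and u :: real
  assumes phr: "\<And>k x s. 0 \<le> ph k x s \<and> ph k x s \<le> 1" and u: "u \<ge> 0"
    and zeta: "\<forall>k\<in>{1..K}. 0 \<le> \<zeta> k \<and> \<zeta> k \<le> u"
  defines "m \<equiv> min (piS P 1) (piS P (-1))"
  defines "\<delta> \<equiv> (\<Sum>s\<in>{-1,1::int}. \<bar>pihat N d' s - piS P s\<bar>) + (\<Sum>k\<in>{1..K}. \<bar>ph k (fst w) (fst (snd w)) - p k (fst w) (fst (snd w))\<bar>) + u"
  shows "MPhi lh w - (2 / m) * \<delta> \<le> Phi lh w (ghat K N ph d' lh (fst w) (fst (snd w)) \<zeta>)"
proof -
  have p1: "piS P 1 > 0" "piS P (-1) > 0" using pi_pos by auto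
  have m: "m > 0" using p1 by (simp add: m_def)
  have d0: "\<delta> \<ge> 0" unfolding \<delta>_def using u by (intro add_nonneg_nonneg sum_nonneg) auto
  obtain x s y where w: "w = (x, s, y)" by (cases w) auto
  let ?E = "\<lambda>k. pihat N d' s * (ph k x s + \<zeta> k) - of_int s * lh k"
  let ?G = "ghat K N ph d' lh (fst w) (fst (snd w)) \<zeta>"
  have G: "?G \<in> {1..K}" "\<forall>j\<in>{1..K}. ?E j \<le> ?E ?G"
    using argmaxK_prop[OF K_pos, of ?E] by (auto simp: ghat_def w)
  show ?thesis
  proof (cases "s \<in> {-1,1}")
    case False
    then have "MPhi lh w = 0" "Phi lh w ?G = p ?G x s" by (auto simp: MPhi_def Phi_def w)
    moreover have "(2 / m) * \<delta> \<ge> 0" using m d0 by simp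
    ultimately show ?thesis using p_range[rule_format, of ?G x s] by linarith
  next
    case True
    have ps: "piS P s \<ge> m" "piS P s > 0" using True p1 by (auto simp: m_def)
    let ?T = "\<lambda>k. piS P s * p k x s - of_int s * lh k"
    have Phi_eq: "Phi lh w k = ?T k / piS P s" for k
      using True ps by (simp add: Phi_def w field_simps)
    have ET: "\<bar>?E k - ?T k\<bar> \<le> \<delta>" if k: "k \<in> {1..K}" for k
    proof -
      have ph0: "0 \<le> pihat N d' s" "pihat N d' s \<le> 1" using pihat_bnd by auto
      have "?E k - ?T k = pihat N d' s * (ph k x s - p k x s) + (pihat N d' s - piS P s) * p k x s + pihat N d' s * \<zeta> k"
        by (simp add: algebra_simps)
      also have "\<bar>\<dots>\<bar> \<le> \<bar>ph k x s - p k x s\<bar> + \<bar>pihat N d' s - piS P s\<bar> + u"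
      proof -
        have a: "\<bar>pihat N d' s * (ph k x s - p k x s)\<bar> \<le> \<bar>ph k x s - p k x s\<bar>"
          using ph0 by (simp add: abs_mult mult_left_le_one_le)
        have b: "\<bar>(pihat N d' s - piS P s) * p k x s\<bar> \<le> \<bar>pihat N d' s - piS P s\<bar>"
          using p_range by (simp add: abs_mult mult_right_le_one_le)
        have c: "\<bar>pihat N d' s * \<zeta> k\<bar> \<le> u"
        proof -
          have "pihat N d' s * \<zeta> k \<le> 1 * u" using ph0 zeta k by (intro mult_mono) auto
          moreover have "0 \<le> pihat N d' s * \<zeta> k" using ph0 zeta k by simp
          ultimately show ?thesis by simp
        qed
        have "\<bar>pihat N d' s * (ph k x s - p k x s) + (pihat N d' s - piS P s) * p k x s + pihat N d' s * \<zeta> k\<bar>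
           \<le> \<bar>pihat N d' s * (ph k x s - p k x s)\<bar> + \<bar>(pihat N d' s - piS P s) * p k x s\<bar> + \<bar>pihat N d' s * \<zeta> k\<bar>"
          by (rule order_trans[OF abs_triangle_ineq add_right_mono[OF abs_triangle_ineq]])
        then show ?thesis using a b c by linarith
      qed
      also have "\<dots> \<le> \<delta>"
      proof -
        have "\<bar>ph k x s - p k x s\<bar> \<le> (\<Sum>k\<in>{1..K}. \<bar>ph k (fst w) (fst (snd w)) - p k (fst w) (fst (snd w))\<bar>)"
          unfolding w fst_conv snd_conv by (rule member_le_sum) (use k in auto)
        moreover have "\<bar>pihat N d' s - piS P s\<bar> \<le> (\<Sum>s\<in>{-1,1::int}. \<bar>pihat N d' s - piS P s\<bar>)"
          using True by (intro member_le_sum) auto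
        ultimately show ?thesis unfolding \<delta>_def by simp
      qed
      finally show ?thesis .
    qed
    have "MPhi lh w \<le> Phi lh w ?G + (2 / m) * \<delta>"
    proof -
      have "Max ((\<lambda>k. Phi lh w k) ` {1..K}) \<le> Phi lh w ?G + (2 / m) * \<delta>"
      proof (rule Max.boundedI)
        show "finite ((\<lambda>k. Phi lh w k) ` {1..K})" by simp
        show "(\<lambda>k. Phi lh w k) ` {1..K} \<noteq> {}" using K_pos by simp
        fix yy assume "yy \<in> (\<lambda>k. Phi lh w k) ` {1..K}"
        then obtain j where j: "j \<in> {1..K}" and yy: "yy = Phi lh w j" by auto
        have "?T j \<le> ?E j + \<delta>" using ET[OF j] by simp
        also have "\<dots> \<le> ?E ?G + \<delta>" using G(2) j by simp
        also have "\<dots> \<le> ?T ?G + 2 * \<delta>" using ET[OF G(1)] by simp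
        finally have "?T j / piS P s \<le> (?T ?G + 2 * \<delta>) / piS P s" using ps by (simp add: divide_right_mono)
        also have "\<dots> = ?T ?G / piS P s + 2 * \<delta> / piS P s" by (simp add: add_divide_distrib)
        also have "2 * \<delta> / piS P s \<le> (2 / m) * \<delta>"
        proof -
          have "2 * \<delta> / piS P s = (2 / piS P s) * \<delta>" by simp
          also have "\<dots> \<le> (2 / m) * \<delta>" using ps m d0 by (intro mult_right_mono) (auto simp: frac_le)
          finally show ?thesis .
        qed
        finally show "yy \<le> Phi lh w ?G + (2 / m) * \<delta>" using yy Phi_eq by simp
      qed
      then show ?thesis using True by (simp add: MPhi_def w)
    qed
    then show ?thesis by simp
  qed
qed

end


context fsetup
begin

interpretation PP: prob_space P by (rule P_prob)

lemma point_bound: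
  fixes ph :: "nat \<Rightarrow> 'x \<Rightarrow> int \<Rightarrow> real" and d' :: "nat \<Rightarrow> 'x \<times> int"
    and z :: "int \<times> nat \<times> nat \<Rightarrow> real" and lh lamstar :: "nat \<Rightarrow> real" and u :: real and N :: nat
  assumes u: "u > 0"
    and phm: "\<And>k. (\<lambda>xs. ph k (fst xs) (snd xs)) \<in> borel_measurable XS_space"
    and phr: "\<And>k x s. 0 \<le> ph k x s \<and> ph k x s \<le> 1"
    and lhmin: "Nsz N d' 1 > 0 \<and> Nsz N d' (-1) > 0 \<longrightarrow> (\<forall>lam. emp_obj K N ph d' z lh \<le> emp_obj K N ph d' z lam)"
    and zb: "\<And>s k i. s \<in> {-1,1} \<Longrightarrow> k \<in> {1..K} \<Longrightarrow> i < N \<Longrightarrow> 0 \<le> z (s,k,i) \<and> z (s,k,i) \<le> u"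
    and lam_min: "\<forall>lam. fair_obj P p K lamstar \<le> fair_obj P p K lam"
  shows "rfrisk P (Zfresh K u) K lamstar (ghat K N ph d' lh) - rfrisk P Zdet K lamstar (\<lambda>x s _. gfair P p K lamstar x s)
     \<le> ((3 + 3 * real K) / min (piS P 1) (piS P (-1))) *
        ((\<integral>w. (\<Sum>k\<in>{1..K}. \<bar>ph k (fst w) (fst (snd w)) - p k (fst w) (fst (snd w))\<bar>) \<partial>P)
         + (\<Sum>s\<in>{-1,1::int}. \<bar>pihat N d' s - piS P s\<bar>)
         + runfair P (Zfresh K u) K (ghat K N ph d' lh) + u)"
proof -
  define m where "m = min (piS P 1) (piS P (-1))"
  define C where "C = (3 + 3 * real K) / m"
  define G where "G = ghat K N ph d' lh"
  define Zf where "Zf = Zfresh K u"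
  define a where "a = (\<integral>w. (\<Sum>k\<in>{1..K}. \<bar>ph k (fst w) (fst (snd w)) - p k (fst w) (fst (snd w))\<bar>) \<partial>P)"
  define b where "b = (\<Sum>s\<in>{-1,1::int}. \<bar>pihat N d' s - piS P s\<bar>)"
  define U where "U = runfair P Zf K G"
  define c where "c = rfrisk P Zdet K lamstar (\<lambda>x s _. gfair P p K lamstar x s)"
  define f where "f = rfrisk P Zf K lamstar G"
  have p1: "piS P 1 > 0" "piS P (-1) > 0" using pi_pos by auto
  have m0: "m > 0" using p1 by (simp add: m_def)
  have m1: "m \<le> 1" unfolding m_def piS_def using PP.prob_le_1 by (simp add: min_le_iff_disj)
  have Zf: "prob_space Zf" unfolding Zf_def using u by (rule Zf_prob)
  have gm: "(\<lambda>q. G (fst (fst q)) (snd (fst q)) (snd q)) \<in> (XS_space \<Otimes>\<^sub>M Zf) \<rightarrow>\<^sub>M count_space UNIV"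
    unfolding G_def ghat_def
  proof (rule meas_argmaxK)
    fix k assume k: "k \<in> {1..K}"
    have bs: "(\<lambda>q. snd (fst q)) \<in> (XS_space \<Otimes>\<^sub>M Zf) \<rightarrow>\<^sub>M count_space UNIV"
      using measurable_fst''[OF mXSs, of Zf] by simp
    have c1: "(\<lambda>q. pihat N d' (snd (fst q))) \<in> borel_measurable (XS_space \<Otimes>\<^sub>M Zf)"
      using meas_count_fun2[OF bs bs, of "\<lambda>s t. pihat N d' s"] by simp
    have c2: "(\<lambda>q. of_int (snd (fst q)) * lh k) \<in> borel_measurable (XS_space \<Otimes>\<^sub>M Zf)"
      using meas_count_fun2[OF bs bs, of "\<lambda>s t. of_int s * lh k"] by simp
    have c3: "(\<lambda>q. ph k (fst (fst q)) (snd (fst q))) \<in> borel_measurable (XS_space \<Otimes>\<^sub>M Zf)"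
      using measurable_fst''[OF phm[of k], of Zf] by simp
    have c4: "(\<lambda>q. snd q k) \<in> borel_measurable (XS_space \<Otimes>\<^sub>M Zf)"
      using measurable_snd''[OF Zf_comp[OF k], of XS_space] by (simp add: Zf_def)
    show "(\<lambda>q. pihat N d' (snd (fst q)) * (ph k (fst (fst q)) (snd (fst q)) + snd q k) - of_int (snd (fst q)) * lh k) \<in> borel_measurable (XS_space \<Otimes>\<^sub>M Zf)"
      by (intro borel_measurable_diff borel_measurable_times borel_measurable_add c1 c2 c3 c4)
  qed
  have gr: "\<And>x s \<zeta>. G x s \<zeta> \<in> {1..K}" unfolding G_def ghat_def using argmaxK_prop[OF K_pos] by blast
  have U1: "U \<le> 1" unfolding U_def by (rule runfair_le1[OF Zf gm gr])
  have U0: "0 \<le> U" unfolding U_def using runfair_bnd[OF Zf gm gr, of 1] K_pos by simp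
  have a0: "0 \<le> a" unfolding a_def by (intro Bochner_Integration.integral_nonneg sum_nonneg) auto
  have b0: "0 \<le> b" unfolding b_def by (intro sum_nonneg) auto
  have fo0: "fair_obj P p K lamstar \<le> 1" using lam_min fair_obj_0 by (meson order_trans)
  have c_low: "1 - fair_obj P p K lamstar \<le> c" unfolding c_def by (rule gfair_c)
  have spread_ls: "\<bar>lamstar k - lamstar 1\<bar> \<le> 1" if k: "k \<in> {1..K}" for k
  proof -
    have 1: "1 \<in> {1..K}" using K_pos by simp
    show ?thesis using fair_obj_ge[OF k 1, of lamstar] fair_obj_ge[OF 1 k, of lamstar] fo0 by (simp add: abs_le_iff)
  qed
  let ?d = "\<lambda>k. pred_rate P Zf G k 1 - pred_rate P Zf G k (-1)"
  have f_split: "f = rfrisk P Zf K lh G + (\<Sum>k\<in>{1..K}. (lamstar k - lh k) * ?d k)"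
  proof -
    have "(\<Sum>k\<in>{1..K}. (lamstar k - lh k) * ?d k) = (\<Sum>k\<in>{1..K}. lamstar k * ?d k) - (\<Sum>k\<in>{1..K}. lh k * ?d k)"
      by (simp add: left_diff_distrib sum_subtractf)
    then show ?thesis unfolding f_def rfrisk_def by simp
  qed
  have "f - c \<le> C * (a + b + U + u)"
  proof (cases "Nsz N d' 1 > 0 \<and> Nsz N d' (-1) > 0")
    case False
    then obtain s where s: "s \<in> {-1,1::int}" "Nsz N d' s = 0" by auto
    have "pihat N d' s = 0" using s by (simp add: pihat_def)
    then have "piS P s \<le> b" unfolding b_def using s p1
      by (smt (verit) abs_of_nonneg abs_minus_commute member_le_sum[of s "{-1,1::int}" "\<lambda>s. \<bar>pihat N d' s - piS P s\<bar>"] finite.emptyI finite_insert abs_ge_zero)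
    then have bm: "m \<le> b" using s by (auto simp: m_def)
    have rr: "rrisk P Zf G \<le> 1" unfolding rrisk_def using Zf
      by (intro prob_space.prob_le_1 prob_space_pair P_prob)
    have "(\<Sum>k\<in>{1..K}. lamstar k * ?d k) \<le> real K * 1 * U"
      unfolding U_def by (rule lam_diff_bound[OF Zf gm gr]) (rule spread_ls)
    then have "f \<le> 1 + real K"
      using rr U1 K_pos unfolding f_def rfrisk_def by (smt (verit) mult_left_le of_nat_0_le_iff)
    then have "f - c \<le> 1 + real K" using c_low fo0 by linarith
    also have "\<dots> \<le> ((1 + real K) / m) * b"
    proof -
      have "(1 + real K) / m * m \<le> (1 + real K) / m * b" using bm m0 by (intro mult_left_mono) auto
      then show ?thesis using m0 by simp
    qed
    also have "\<dots> \<le> C * b" unfolding C_def using m0 b0 by (intro mult_right_mono divide_right_mono) auto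
    also have "\<dots> \<le> C * (a + b + U + u)" unfolding C_def using m0 a0 U0 u by (intro mult_left_mono) auto
    finally show ?thesis .
  next
    case True
    have N1: "Nsz N d' 1 > 0" and N2: "Nsz N d' (-1) > 0" using True by auto
    have lmin: "\<And>lam. emp_obj K N ph d' z lh \<le> emp_obj K N ph d' z lam" using lhmin True by blast
    have nn: "\<And>s k i. s \<in> {-1,1} \<Longrightarrow> k \<in> {1..K} \<Longrightarrow> i < N \<Longrightarrow> 0 \<le> pihat N d' s * (ph k (fst (d' i)) s + z (s,k,i))"
      using pihat_bnd phr zb by (meson add_nonneg_nonneg mult_nonneg_nonneg)
    have e0: "emp_obj K N ph d' z (\<lambda>_. 0) \<le> 2 * (1 + u)"
      using emp_le[of N d' K ph z u, OF N1 N2 K_pos phr zb] by blast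
    have spread_lh: "\<bar>lh k - lh 1\<bar> \<le> 2 + 2 * u" if k: "k \<in> {1..K}" for k
    proof -
      have 1: "1 \<in> {1..K}" using K_pos by simp
      have "lh k - lh 1 \<le> emp_obj K N ph d' z lh" by (rule emp_ge[OF N1 N2 nn 1 k])
      moreover have "lh 1 - lh k \<le> emp_obj K N ph d' z lh" by (rule emp_ge[OF N1 N2 nn k 1])
      moreover have "emp_obj K N ph d' z lh \<le> 2 * (1 + u)" using lmin[of "\<lambda>_. 0"] e0 by linarith
      ultimately show ?thesis by (simp add: abs_le_iff)
    qed
    have lamdiff: "(\<Sum>k\<in>{1..K}. (lamstar k - lh k) * ?d k) \<le> real K * (3 + 2 * u) * U"
      unfolding U_def
    proof (rule lam_diff_bound[OF Zf gm gr])
      fix k assume k: "k \<in> {1..K}"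
      show "\<bar>(lamstar k - lh k) - (lamstar 1 - lh 1)\<bar> \<le> 3 + 2 * u"
        using spread_ls[OF k] spread_lh[OF k] by (simp add: abs_le_iff)
    qed
    have main: "rfrisk P Zf K lh G \<le> 1 - fair_obj P p K lh + (2 / m) * (a + b + u)"
    proof -
      interpret ZF: prob_space Zf by (rule Zf)
      interpret PZ: pair_prob_space P Zf by unfold_locales
      define SS where "SS = (\<lambda>w::'x \<times> int \<times> nat. \<Sum>k\<in>{1..K}. \<bar>ph k (fst w) (fst (snd w)) - p k (fst w) (fst (snd w))\<bar>)"
      define \<delta> where "\<delta> = (\<lambda>w. b + SS w + u)"
      have mph: "(\<lambda>w. ph k (fst w) (fst (snd w))) \<in> borel_measurable P" for k
        using measurable_compose[OF mXS phm[of k]] by simp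
      have mSS: "SS \<in> borel_measurable P" unfolding SS_def using mph mp
        by (intro borel_measurable_sum borel_measurable_abs borel_measurable_diff) auto
      have SSb: "\<bar>SS w\<bar> \<le> real K" for w
      proof -
        have "SS w \<le> (\<Sum>k\<in>{1..K}. 1)" unfolding SS_def
        proof (intro sum_mono)
          fix k
          have "0 \<le> ph k (fst w) (fst (snd w))" "ph k (fst w) (fst (snd w)) \<le> 1" using phr by auto
          moreover have "0 \<le> p k (fst w) (fst (snd w))" "p k (fst w) (fst (snd w)) \<le> 1" using p_range by auto
          ultimately show "\<bar>ph k (fst w) (fst (snd w)) - p k (fst w) (fst (snd w))\<bar> \<le> 1" by (simp add: abs_le_iff)
        qed
        moreover have "0 \<le> SS w" unfolding SS_def by (intro sum_nonneg) auto
        ultimately show ?thesis by simp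
      qed
      have iSS: "integrable P SS" by (rule int_bdd[OF PP.finite_measure_axioms mSS SSb])
      have aSS: "a = (\<integral>w. SS w \<partial>P)" unfolding a_def SS_def ..
      define h where "h = (\<lambda>w. MPhi lh w - (2 / m) * \<delta> w)"
      have ih: "integrable P h" unfolding h_def \<delta>_def using int_MPhi iSS by auto
      have mh: "h \<in> borel_measurable P" using ih by auto
      have inth: "(\<integral>w. h w \<partial>P) = fair_obj P p K lh - (2 / m) * (b + a + u)"
      proof -
        have "(\<integral>w. \<delta> w \<partial>P) = b + a + u" unfolding \<delta>_def aSS using iSS PP.prob_space by simp
        then show ?thesis unfolding h_def using int_MPhi iSS by (simp add: fair_obj_eq \<delta>_def)
      qed
      have ihQ: "integrable (P \<Otimes>\<^sub>M Zf) (\<lambda>q. h (fst q))"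
      proof -
        have "integrable (distr (P \<Otimes>\<^sub>M Zf) P fst) h \<longleftrightarrow> integrable (P \<Otimes>\<^sub>M Zf) (\<lambda>q. h (fst q))"
          by (rule integrable_distr_eq) (auto simp: mh)
        then show ?thesis using ih ZF.distr_pair_fst[of P] by simp
      qed
      have AEQ: "AE q in P \<Otimes>\<^sub>M Zf. \<forall>k\<in>{1..K}. 0 \<le> snd q k \<and> snd q k \<le> u"
      proof (rule PZ.AE_pair_measure)
        have "Measurable.pred (P \<Otimes>\<^sub>M Zf) (\<lambda>q. \<forall>k\<in>{1..K}. 0 \<le> snd q k \<and> snd q k \<le> u)"
        proof (rule pred_intros_finite(3))
          show "finite {1..K}" by simp
          fix k assume k: "k \<in> {1..K}"
          have [measurable]: "(\<lambda>q. snd q k) \<in> borel_measurable (P \<Otimes>\<^sub>M Zf)"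
            using measurable_snd''[OF Zf_comp[OF k], of P] by (simp add: Zf_def)
          show "Measurable.pred (P \<Otimes>\<^sub>M Zf) (\<lambda>q. 0 \<le> snd q k \<and> snd q k \<le> u)" by measurable
        qed
        then show "{q \<in> space (P \<Otimes>\<^sub>M Zf). \<forall>k\<in>{1..K}. 0 \<le> snd q k \<and> snd q k \<le> u} \<in> sets (P \<Otimes>\<^sub>M Zf)"
          by (simp add: pred_def)
        show "AE x in P. AE y in Zf. \<forall>k\<in>{1..K}. 0 \<le> snd (x, y) k \<and> snd (x, y) k \<le> u"
        proof -
          have "AE y in Zf. \<forall>k\<in>{1..K}. 0 \<le> y k \<and> y k \<le> u" unfolding Zf_def by (rule Zf_AE[OF u])
          then show ?thesis by simp
        qed
      qed
      have "(\<integral>q. h (fst q) \<partial>(P \<Otimes>\<^sub>M Zf)) \<le> (\<integral>q. Phi lh (fst q) (G (fst (fst q)) (fst (snd (fst q))) (snd q)) \<partial>(P \<Otimes>\<^sub>M Zf))"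
      proof (rule integral_mono_AE[OF ihQ int_PhiG[OF Zf gm gr]])
        show "AE q in P \<Otimes>\<^sub>M Zf. h (fst q) \<le> Phi lh (fst q) (G (fst (fst q)) (fst (snd (fst q))) (snd q))"
          using AEQ
        proof (rule AE_mp, intro AE_I2 impI)
          fix q :: "('x \<times> int \<times> nat) \<times> (nat \<Rightarrow> real)"
          assume zq: "\<forall>k\<in>{1..K}. 0 \<le> snd q k \<and> snd q k \<le> u"
          have "MPhi lh (fst q) - (2 / min (piS P 1) (piS P (-1))) * ((\<Sum>s\<in>{-1,1::int}. \<bar>pihat N d' s - piS P s\<bar>) + (\<Sum>k\<in>{1..K}. \<bar>ph k (fst (fst q)) (fst (snd (fst q))) - p k (fst (fst q)) (fst (snd (fst q)))\<bar>) + u)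
             \<le> Phi lh (fst q) (ghat K N ph d' lh (fst (fst q)) (fst (snd (fst q))) (snd q))"
            by (rule pt_ineq[OF phr _ zq]) (use u in simp)
          then show "h (fst q) \<le> Phi lh (fst q) (G (fst (fst q)) (fst (snd (fst q))) (snd q))"
            unfolding h_def \<delta>_def SS_def b_def m_def G_def by simp
        qed
      qed
      moreover have "(\<integral>q. h (fst q) \<partial>(P \<Otimes>\<^sub>M Zf)) = (\<integral>w. h w \<partial>P)" by (rule intQ_fst[OF Zf mh])
      ultimately have "fair_obj P p K lh - (2 / m) * (b + a + u) \<le> (\<integral>q. Phi lh (fst q) (G (fst (fst q)) (fst (snd (fst q))) (snd q)) \<partial>(P \<Otimes>\<^sub>M Zf))"
        using inth by simp
      then show ?thesis using rfrisk_eq[OF Zf gm gr, of lh] by (simp add: algebra_simps)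
    qed
    have fo: "fair_obj P p K lamstar \<le> fair_obj P p K lh" using lam_min by blast
    have fc: "f - c \<le> (2 / m) * (a + b + u) + real K * (3 + 2 * u) * U"
      using f_split lamdiff main fo c_low by linarith
    have C1: "2 / m \<le> C" unfolding C_def using m0 by (intro divide_right_mono) auto
    have C2: "3 * real K \<le> C"
    proof -
      have "3 * real K \<le> 3 * real K / m" using m0 m1 by (simp add: le_divide_eq mult_left_le)
      also have "\<dots> \<le> C" unfolding C_def using m0 by (intro divide_right_mono) auto
      finally show ?thesis .
    qed
    have C3: "2 / m + 2 * real K \<le> C"
    proof -
      have "2 * real K \<le> 3 * real K / m" using m0 m1 by (simp add: le_divide_eq) (smt (verit) mult_left_le of_nat_0_le_iff)
      moreover have "2 / m \<le> 3 / m" using m0 by (intro divide_right_mono) auto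
      ultimately show ?thesis unfolding C_def using m0 by (simp add: add_divide_distrib)
    qed
    have "real K * (3 + 2 * u) * U \<le> 3 * real K * U + 2 * real K * u"
    proof -
      have "real K * (3 + 2 * u) * U = 3 * real K * U + 2 * real K * u * U" by (simp add: algebra_simps)
      also have "2 * real K * u * U \<le> 2 * real K * u * 1" using U1 u by (intro mult_left_mono) auto
      finally show ?thesis by simp
    qed
    moreover have "(2 / m) * a \<le> C * a" using C1 a0 by (rule mult_right_mono)
    moreover have "(2 / m) * b \<le> C * b" using C1 b0 by (rule mult_right_mono)
    moreover have "3 * real K * U \<le> C * U" using C2 U0 by (rule mult_right_mono)
    moreover have "(2 / m + 2 * real K) * u \<le> C * u" using C3 u by (intro mult_right_mono) auto
    moreover have "(2 / m) * (a + b + u) = (2 / m) * a + (2 / m) * b + (2 / m) * u" by (simp add: distrib_left)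
    moreover have "(2 / m + 2 * real K) * u = (2 / m) * u + 2 * real K * u" by (simp add: algebra_simps)
    moreover have "C * (a + b + U + u) = C * a + C * b + C * U + C * u" by (simp add: algebra_simps)
    ultimately show ?thesis using fc by linarith
  qed
  then show ?thesis unfolding f_def c_def C_def m_def a_def b_def U_def G_def Zf_def by simp
qed

end


lemma AE_pair_snd:
  assumes M1: "prob_space M1" and M2: "prob_space M2" and ae: "AE y in M2. R y"
  shows "AE x in M1 \<Otimes>\<^sub>M M2. R (snd x)"
proof -
  interpret M2: prob_space M2 by (rule M2)
  from ae obtain N where N: "{y \<in> space M2. \<not> R y} \<subseteq> N" "emeasure M2 N = 0" "N \<in> sets M2"
    by (rule AE_E)
  show ?thesis
  proof (rule AE_I)
    show "{x \<in> space (M1 \<Otimes>\<^sub>M M2). \<not> R (snd x)} \<subseteq> space M1 \<times> N"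
      using N(1) by (auto simp: space_pair_measure)
    show "space M1 \<times> N \<in> sets (M1 \<Otimes>\<^sub>M M2)" using N(3) by auto
    show "emeasure (M1 \<Otimes>\<^sub>M M2) (space M1 \<times> N) = 0"
      using N(2,3) by (simp add: M2.emeasure_pair_measure_Times)
  qed
qed

lemma int_pair_fst:
  fixes h :: "'a \<Rightarrow> real"
  assumes "prob_space M2" "h \<in> borel_measurable M1"
  shows "(\<integral>x. h (fst x) \<partial>(M1 \<Otimes>\<^sub>M M2)) = (\<integral>w. h w \<partial>M1)"
proof -
  have "integral\<^sup>L (distr (M1 \<Otimes>\<^sub>M M2) M1 fst) h = (\<integral>q. h (fst q) \<partial>(M1 \<Otimes>\<^sub>M M2))"
    by (rule integral_distr) (auto simp: assms)
  then show ?thesis using prob_space.distr_pair_fst[OF assms(1), of M1] by simp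
qed

lemma int_pair_snd:
  fixes h :: "'b \<Rightarrow> real"
  assumes M1: "prob_space M1" and M2: "prob_space M2" and h: "h \<in> borel_measurable M2"
  shows "(\<integral>x. h (snd x) \<partial>(M1 \<Otimes>\<^sub>M M2)) = (\<integral>w. h w \<partial>M2)"
proof -
  interpret M1: prob_space M1 by (rule M1)
  interpret M2: prob_space M2 by (rule M2)
  interpret pair_prob_space M1 M2 by unfold_locales
  have "(\<lambda>x. h (snd x)) \<in> borel_measurable (M1 \<Otimes>\<^sub>M M2)" using h by measurable
  from integral_product_swap[OF this]
  have "(\<integral>x. h (snd x) \<partial>(M1 \<Otimes>\<^sub>M M2)) = (\<integral>y. h (fst y) \<partial>(M2 \<Otimes>\<^sub>M M1))"
    by (simp add: case_prod_beta')
  also have "\<dots> = (\<integral>w. h w \<partial>M2)" by (rule int_pair_fst[OF M1 h])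
  finally show ?thesis .
qed

lemma meas_measure_section:
  assumes Q: "prob_space Q" and R: "Measurable.pred (T \<Otimes>\<^sub>M Q) (\<lambda>x. R (fst x) (snd x))"
  shows "(\<lambda>t. measure Q {q \<in> space Q. R t q}) \<in> borel_measurable T"
proof -
  interpret Q: prob_space Q by (rule Q)
  define A where "A = {x \<in> space (T \<Otimes>\<^sub>M Q). R (fst x) (snd x)}"
  have A: "A \<in> sets (T \<Otimes>\<^sub>M Q)" using R unfolding A_def by (simp add: pred_def)
  have m: "(\<lambda>t. emeasure Q (Pair t -` A)) \<in> borel_measurable T"
    by (rule Q.measurable_emeasure_Pair[OF A])
  have "(\<lambda>t. enn2real (emeasure Q (Pair t -` A))) \<in> borel_measurable T" using m by measurable
  moreover have "enn2real (emeasure Q (Pair t -` A)) = measure Q {q \<in> space Q. R t q}" if "t \<in> space T" for t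
  proof -
    have "Pair t -` A = {q \<in> space Q. R t q}" using that by (auto simp: A_def space_pair_measure)
    then show ?thesis by (simp add: measure_def)
  qed
  ultimately show ?thesis by (rule measurable_cong[THEN iffD1, rotated]) simp
qed



context fsetup
begin

interpretation PP: prob_space P by (rule P_prob)

lemma meas_rf:
  fixes Gt :: "'t \<Rightarrow> 'x \<Rightarrow> int \<Rightarrow> 'z \<Rightarrow> nat" and T :: "'t measure" and Z :: "'z measure"
  assumes Z: "prob_space Z"
    and HM: "(\<lambda>x. Gt (fst x) (fst (fst (snd x))) (fst (snd (fst (snd x)))) (snd (snd x))) \<in> (T \<Otimes>\<^sub>M (P \<Otimes>\<^sub>M Z)) \<rightarrow>\<^sub>M count_space UNIV"
  shows "(\<lambda>t. rfrisk P Z K lam (Gt t)) \<in> borel_measurable T"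
    and "(\<lambda>t. runfair P Z K (Gt t)) \<in> borel_measurable T"
proof -
  interpret ZZ: prob_space Z by (rule Z)
  interpret PZ: pair_prob_space P Z by unfold_locales
  have Q: "prob_space (P \<Otimes>\<^sub>M Z)" by (rule PZ.prob_space_axioms)
  have mS2: "(\<lambda>x. fst (snd (fst (snd x)))) \<in> (T \<Otimes>\<^sub>M (P \<Otimes>\<^sub>M Z)) \<rightarrow>\<^sub>M count_space UNIV"
  proof -
    have "(\<lambda>x. fst (snd (fst x))) \<in> (P \<Otimes>\<^sub>M Z) \<rightarrow>\<^sub>M count_space UNIV"
      using measurable_fst''[OF mS, of Z] by simp
    from measurable_snd''[OF this, of T] show ?thesis by simp
  qed
  have mY2: "(\<lambda>x. snd (snd (fst (snd x)))) \<in> (T \<Otimes>\<^sub>M (P \<Otimes>\<^sub>M Z)) \<rightarrow>\<^sub>M count_space UNIV"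
  proof -
    have "(\<lambda>x. snd (snd (fst x))) \<in> (P \<Otimes>\<^sub>M Z) \<rightarrow>\<^sub>M count_space UNIV"
      using measurable_fst''[OF mY, of Z] by simp
    from measurable_snd''[OF this, of T] show ?thesis by simp
  qed
  have pr: "(\<lambda>t. pred_rate P Z (Gt t) k s) \<in> borel_measurable T" for k s
  proof -
    have e: "{(w, z) \<in> space (P \<Otimes>\<^sub>M Z). Gt t (fst w) (fst (snd w)) z = k \<and> fst (snd w) = s}
       = {q \<in> space (P \<Otimes>\<^sub>M Z). Gt t (fst (fst q)) (fst (snd (fst q))) (snd q) = k \<and> fst (snd (fst q)) = s}" for t
      by auto
    have "Measurable.pred (T \<Otimes>\<^sub>M (P \<Otimes>\<^sub>M Z)) (\<lambda>x. Gt (fst x) (fst (fst (snd x))) (fst (snd (fst (snd x)))) (snd (snd x)) = k \<and> fst (snd (fst (snd x))) = s)"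
      using HM mS2 by measurable
    from meas_measure_section[OF Q this]
    have "(\<lambda>t. measure (P \<Otimes>\<^sub>M Z) {q \<in> space (P \<Otimes>\<^sub>M Z). Gt t (fst (fst q)) (fst (snd (fst q))) (snd q) = k \<and> fst (snd (fst q)) = s}) \<in> borel_measurable T" by simp
    then show ?thesis unfolding pred_rate_def e by measurable
  qed
  have rr: "(\<lambda>t. rrisk P Z (Gt t)) \<in> borel_measurable T"
  proof -
    have e: "{(w, z) \<in> space (P \<Otimes>\<^sub>M Z). Gt t (fst w) (fst (snd w)) z \<noteq> snd (snd w)}
       = {q \<in> space (P \<Otimes>\<^sub>M Z). Gt t (fst (fst q)) (fst (snd (fst q))) (snd q) \<noteq> snd (snd (fst q))}" for t
      by auto
    have "Measurable.pred (T \<Otimes>\<^sub>M (P \<Otimes>\<^sub>M Z)) (\<lambda>x. Gt (fst x) (fst (fst (snd x))) (fst (snd (fst (snd x)))) (snd (snd x)) \<noteq> snd (snd (fst (snd x))))"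
      using HM mY2 by measurable
    from meas_measure_section[OF Q this]
    show ?thesis unfolding rrisk_def e by simp
  qed
  show "(\<lambda>t. rfrisk P Z K lam (Gt t)) \<in> borel_measurable T"
    unfolding rfrisk_def using rr pr by measurable
  show "(\<lambda>t. runfair P Z K (Gt t)) \<in> borel_measurable T"
    unfolding runfair_def using pr by measurable
qed

end


context fsetup
begin

interpretation PP: prob_space P by (rule P_prob)

lemma D'_comp: "i < N \<Longrightarrow> (\<lambda>d'. snd (d' i)) \<in> sampleD' N P \<rightarrow>\<^sub>M count_space UNIV"
proof -
  assume i: "i < N"
  have "(\<lambda>d'. d' i) \<in> sampleD' N P \<rightarrow>\<^sub>M distr P XS_space (\<lambda>w. (fst w, fst (snd w)))"
    unfolding sampleD'_def using i by (intro measurable_component_singleton) auto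
  then have "(\<lambda>d'. d' i) \<in> sampleD' N P \<rightarrow>\<^sub>M XS_space"
    by (simp add: measurable_cong_sets[OF refl sets_distr])
  from measurable_compose[OF this mXSs] show ?thesis by (simp add: comp_def)
qed

lemma pihat_meas:
  assumes g: "g \<in> M \<rightarrow>\<^sub>M sampleD' N P" and s: "sf \<in> M \<rightarrow>\<^sub>M count_space UNIV"
  shows "(\<lambda>x. pihat N (g x) (sf x)) \<in> borel_measurable M"
proof -
  have e: "pihat N d' s = (\<Sum>i<N. (if snd (d' i) = s then 1 else 0)) / real N" for d' s
  proof -
    have "real (Nsz N d' s) = (\<Sum>i<N. (if snd (d' i) = s then 1 else (0::real)))"
      unfolding Nsz_def by (simp add: sum.If_cases Int_def conj_commute)
    then show ?thesis by (simp add: pihat_def)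
  qed
  have [measurable]: "(\<lambda>x. snd (g x i)) \<in> M \<rightarrow>\<^sub>M count_space UNIV" if "i < N" for i
    using measurable_compose[OF g D'_comp[OF that]] by (simp add: comp_def)
  have [measurable]: "sf \<in> M \<rightarrow>\<^sub>M count_space UNIV" by (rule s)
  have "(\<lambda>x. (\<Sum>i<N. (if snd (g x i) = sf x then 1 else (0::real))) / real N) \<in> borel_measurable M"
    by measurable
  then show ?thesis by (simp add: e)
qed

lemma pred_rate_range:
  assumes Z: "prob_space Z" and s: "s \<in> {-1,1}"
  shows "0 \<le> pred_rate P Z g k s \<and> pred_rate P Z g k s \<le> 1 / piS P s"
proof -
  interpret ZZ: prob_space Z by (rule Z)
  interpret PZ: pair_prob_space P Z by unfold_locales
  have ps: "piS P s > 0" using pi_pos' s by simp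
  let ?A = "{(w, z) \<in> space (P \<Otimes>\<^sub>M Z). g (fst w) (fst (snd w)) z = k \<and> fst (snd w) = s}"
  have "measure (P \<Otimes>\<^sub>M Z) ?A \<le> 1" by (rule PZ.prob_le_1)
  then show ?thesis unfolding pred_rate_def using ps by (simp add: divide_right_mono)
qed

lemma rfrisk_bnd:
  assumes Z: "prob_space Z"
  shows "\<bar>rfrisk P Z K lam g\<bar> \<le> 1 + (\<Sum>k\<in>{1..K}. \<bar>lam k\<bar>) * (1 / piS P 1 + 1 / piS P (-1))"
proof -
  interpret ZZ: prob_space Z by (rule Z)
  interpret PZ: pair_prob_space P Z by unfold_locales
  let ?B = "1 / piS P 1 + 1 / piS P (-1)"
  have r: "\<bar>rrisk P Z g\<bar> \<le> 1" unfolding rrisk_def using PZ.prob_le_1 by simp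
  have d: "\<bar>pred_rate P Z g k 1 - pred_rate P Z g k (-1)\<bar> \<le> ?B" for k
    using pred_rate_range[OF Z, of 1 g k] pred_rate_range[OF Z, of "-1" g k] by (simp add: abs_le_iff)
  have "\<bar>\<Sum>k\<in>{1..K}. lam k * (pred_rate P Z g k 1 - pred_rate P Z g k (-1))\<bar>
      \<le> (\<Sum>k\<in>{1..K}. \<bar>lam k * (pred_rate P Z g k 1 - pred_rate P Z g k (-1))\<bar>)" by (rule sum_abs)
  also have "\<dots> \<le> (\<Sum>k\<in>{1..K}. \<bar>lam k\<bar> * ?B)"
    by (intro sum_mono) (simp add: abs_mult d mult_left_mono)
  also have "\<dots> = (\<Sum>k\<in>{1..K}. \<bar>lam k\<bar>) * ?B" by (simp add: sum_distrib_right)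
  finally show ?thesis unfolding rfrisk_def using r by linarith
qed

lemma runfair_bnd2:
  assumes Z: "prob_space Z"
  shows "\<bar>runfair P Z K g\<bar> \<le> 1 / piS P 1 + 1 / piS P (-1)"
proof -
  let ?B = "1 / piS P 1 + 1 / piS P (-1)"
  have d: "\<bar>pred_rate P Z g k 1 - pred_rate P Z g k (-1)\<bar> \<le> ?B" for k
    using pred_rate_range[OF Z, of 1 g k] pred_rate_range[OF Z, of "-1" g k] by (simp add: abs_le_iff)
  have le: "runfair P Z K g \<le> ?B" unfolding runfair_def using K_pos d by (subst Max_le_iff) auto
  have ge: "\<bar>pred_rate P Z g 1 1 - pred_rate P Z g 1 (-1)\<bar> \<le> runfair P Z K g"
    unfolding runfair_def using K_pos by (intro Max_ge) auto
  show ?thesis using le ge by (simp add: abs_le_iff)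
qed

end


theorem theorem2:
  fixes P :: "('x::euclidean_space \<times> int \<times> nat) measure"
    and K :: nat
    and p :: "nat \<Rightarrow> 'x \<Rightarrow> int \<Rightarrow> real"
    and lamstar :: "nat \<Rightarrow> real"
  assumes P_prob: "prob_space P"
    and P_sets: "sets P = sets XSY_space"
    and P_supp: "AE w in P. fst (snd w) \<in> {-1, 1} \<and> snd (snd w) \<in> {1..K}"
    and pi_pos: "\<forall>s\<in>{-1, 1}. piS P s > 0"
    and p_meas: "\<forall>k. (\<lambda>(x, s). p k x s) \<in> borel_measurable XS_space"
    and p_range: "\<forall>k x s. 0 \<le> p k x s \<and> p k x s \<le> 1"
    and p_cond: "\<forall>k A. A \<in> sets XS_space \<longrightarrow>
        measure P {w \<in> space P. (fst w, fst (snd w)) \<in> A \<and> snd (snd w) = k}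
        = (\<integral>w. indicator A (fst w, fst (snd w)) * p k (fst w) (fst (snd w)) \<partial>P)"
    and continuity: "\<forall>k\<in>{1..K}. \<forall>j\<in>{1..K}. \<forall>s\<in>{-1, 1}. k \<noteq> j \<longrightarrow>
        continuous_on UNIV (\<lambda>t. measure P {w \<in> space P. fst (snd w) = s \<and>
            p k (fst w) (fst (snd w)) - p j (fst w) (fst (snd w)) \<le> t} / piS P s)"
    and lam_min: "\<forall>lam. fair_obj P p K lamstar \<le> fair_obj P p K lam"
  shows "\<exists>C>0. \<forall>(n::nat) (N::nat) (u::real)
      (phat :: (nat \<Rightarrow> 'x \<times> int \<times> nat) \<Rightarrow> nat \<Rightarrow> 'x \<Rightarrow> int \<Rightarrow> real)
      (lamhat :: (nat \<Rightarrow> 'x \<times> int \<times> nat) \<Rightarrow> (nat \<Rightarrow> 'x \<times> int) \<Rightarrow> (int \<times> nat \<times> nat \<Rightarrow> real) \<Rightarrow> nat \<Rightarrow> real).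
      u > 0 \<longrightarrow>
      (\<forall>k. (\<lambda>(d, x, s). phat d k x s) \<in> borel_measurable (sampleD n P \<Otimes>\<^sub>M XS_space)) \<longrightarrow>
      (\<forall>d k x s. 0 \<le> phat d k x s \<and> phat d k x s \<le> 1) \<longrightarrow>
      (\<forall>k. (\<lambda>(d, d', z). lamhat d d' z k)
           \<in> borel_measurable (sampleD n P \<Otimes>\<^sub>M sampleD' N P \<Otimes>\<^sub>M Zemp K N u)) \<longrightarrow>
      (\<forall>d\<in>space (sampleD n P). \<forall>d'\<in>space (sampleD' N P). \<forall>z\<in>space (Zemp K N u).
         Nsz N d' 1 > 0 \<and> Nsz N d' (-1) > 0 \<longrightarrow>
         (\<forall>lam. emp_obj K N (phat d) d' z (lamhat d d' z) \<le> emp_obj K N (phat d) d' z lam)) \<longrightarrow>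
      (\<integral>t. rfrisk P (Zfresh K u) K lamstar
              (ghat K N (phat (fst t)) (fst (snd t)) (lamhat (fst t) (fst (snd t)) (snd (snd t))))
         \<partial>(sampleD n P \<Otimes>\<^sub>M sampleD' N P \<Otimes>\<^sub>M Zemp K N u))
      - rfrisk P Zdet K lamstar (\<lambda>x s _. gfair P p K lamstar x s)
      \<le> C * ((\<integral>d. (\<integral>w. (\<Sum>k\<in>{1..K}. \<bar>phat d k (fst w) (fst (snd w)) - p k (fst w) (fst (snd w))\<bar>) \<partial>P)
                  \<partial>sampleD n P)
            + (\<Sum>s\<in>{-1, 1::int}. \<integral>d'. \<bar>pihat N d' s - piS P s\<bar> \<partial>sampleD' N P)
            + (\<integral>t. runfair P (Zfresh K u) K
                    (ghat K N (phat (fst t)) (fst (snd t)) (lamhat (fst t) (fst (snd t)) (snd (snd t))))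
                 \<partial>(sampleD n P \<Otimes>\<^sub>M sampleD' N P \<Otimes>\<^sub>M Zemp K N u))
            + u)"

proof -
  interpret F: fsetup P K p by (rule fsetup.intro[OF P_prob P_sets P_supp pi_pos p_meas p_range p_cond])
  interpret PP: prob_space P by (rule P_prob)
  define m where "m = min (piS P 1) (piS P (-1))"
  define C where "C = (3 + 3 * real K) / m"
  have p1: "piS P 1 > 0" "piS P (-1) > 0" using pi_pos by auto
  have m0: "m > 0" using p1 by (simp add: m_def)
  have C0: "C > 0" unfolding C_def using m0 by simp
  show ?thesis
  proof (intro exI[of _ C] conjI allI impI)
    show "C > 0" by (rule C0)
    fix n N :: nat and u :: real
      and phat :: "(nat \<Rightarrow> 'x \<times> int \<times> nat) \<Rightarrow> nat \<Rightarrow> 'x \<Rightarrow> int \<Rightarrow> real"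
      and lamhat :: "(nat \<Rightarrow> 'x \<times> int \<times> nat) \<Rightarrow> (nat \<Rightarrow> 'x \<times> int) \<Rightarrow> (int \<times> nat \<times> nat \<Rightarrow> real) \<Rightarrow> nat \<Rightarrow> real"
    assume u: "u > 0"
      and phj: "\<forall>k. (\<lambda>(d, x, s). phat d k x s) \<in> borel_measurable (sampleD n P \<Otimes>\<^sub>M XS_space)"
      and phr: "\<forall>d k x s. 0 \<le> phat d k x s \<and> phat d k x s \<le> 1"
      and lhm: "\<forall>k. (\<lambda>(d, d', z). lamhat d d' z k) \<in> borel_measurable (sampleD n P \<Otimes>\<^sub>M sampleD' N P \<Otimes>\<^sub>M Zemp K N u)"
      and lhmin: "\<forall>d\<in>space (sampleD n P). \<forall>d'\<in>space (sampleD' N P). \<forall>z\<in>space (Zemp K N u).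
         Nsz N d' 1 > 0 \<and> Nsz N d' (-1) > 0 \<longrightarrow>
         (\<forall>lam. emp_obj K N (phat d) d' z (lamhat d d' z) \<le> emp_obj K N (phat d) d' z lam)"
    define D where "D = sampleD n P"
    define D' where "D' = sampleD' N P"
    define ZE where "ZE = Zemp K N u"
    define T where "T = D \<Otimes>\<^sub>M D' \<Otimes>\<^sub>M ZE"
    define Zf where "Zf = Zfresh K u"
    define Gt where "Gt = (\<lambda>t. ghat K N (phat (fst t)) (fst (snd t)) (lamhat (fst t) (fst (snd t)) (snd (snd t))))"
    define c where "c = rfrisk P Zdet K lamstar (\<lambda>x s _. gfair P p K lamstar x s)"
    define f where "f = (\<lambda>t. rfrisk P Zf K lamstar (Gt t))"
    define U where "U = (\<lambda>t. runfair P Zf K (Gt t))"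
    define a where "a = (\<lambda>d. (\<integral>w. (\<Sum>k\<in>{1..K}. \<bar>phat d k (fst w) (fst (snd w)) - p k (fst w) (fst (snd w))\<bar>) \<partial>P))"
    define b where "b = (\<lambda>d'::nat \<Rightarrow> 'x \<times> int. (\<Sum>s\<in>{-1,1::int}. \<bar>pihat N d' s - piS P s\<bar>))"
    have pD: "prob_space D" unfolding D_def sampleD_def by (intro prob_space_PiM P_prob)
    have pD': "prob_space D'" unfolding D'_def sampleD'_def
      by (intro prob_space_PiM PP.prob_space_distr F.mXS)
    have pZE: "prob_space ZE" unfolding ZE_def Zemp_def using u by (intro prob_space_PiM unif_prob)
    have pD'ZE: "prob_space (D' \<Otimes>\<^sub>M ZE)" by (rule prob_space_pair[OF pD' pZE])
    have pT: "prob_space T" unfolding T_def by (rule prob_space_pair[OF pD pD'ZE])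
    have pZf: "prob_space Zf" unfolding Zf_def using u by (rule Zf_prob)
    interpret TT: prob_space T by (rule pT)
    interpret DD': prob_space D' by (rule pD')
    have HM: "(\<lambda>x. Gt (fst x) (fst (fst (snd x))) (fst (snd (fst (snd x)))) (snd (snd x))) \<in> (T \<Otimes>\<^sub>M (P \<Otimes>\<^sub>M Zf)) \<rightarrow>\<^sub>M count_space UNIV"
      unfolding Gt_def ghat_def
    proof (rule meas_argmaxK)
      fix k assume k: "k \<in> {1..K}"
      let ?M = "T \<Otimes>\<^sub>M (P \<Otimes>\<^sub>M Zf)"
      have mT: "fst \<in> ?M \<rightarrow>\<^sub>M T" by simp
      have md: "(\<lambda>x. fst (fst x)) \<in> ?M \<rightarrow>\<^sub>M D"
        using measurable_fst''[OF measurable_fst[of D "D' \<Otimes>\<^sub>M ZE"], of "P \<Otimes>\<^sub>M Zf"] unfolding T_def by simp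
      have md': "(\<lambda>x. fst (snd (fst x))) \<in> ?M \<rightarrow>\<^sub>M D'"
      proof -
        have "(\<lambda>t. fst (snd t)) \<in> T \<rightarrow>\<^sub>M D'" unfolding T_def
          using measurable_snd''[OF measurable_fst[of D' ZE], of D] by simp
        from measurable_fst''[OF this, of "P \<Otimes>\<^sub>M Zf"] show ?thesis by simp
      qed
      have mXSx: "(\<lambda>x. (fst (fst (snd x)), fst (snd (fst (snd x))))) \<in> ?M \<rightarrow>\<^sub>M XS_space"
      proof -
        have "(\<lambda>q. (fst (fst q), fst (snd (fst q)))) \<in> (P \<Otimes>\<^sub>M Zf) \<rightarrow>\<^sub>M XS_space"
          using measurable_fst''[OF F.mXS, of Zf] by simp
        from measurable_snd''[OF this, of T] show ?thesis by simp
      qed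
      have mSx: "(\<lambda>x. fst (snd (fst (snd x)))) \<in> ?M \<rightarrow>\<^sub>M count_space UNIV"
        using measurable_compose[OF mXSx F.mXSs] by simp
      have c1: "(\<lambda>x. pihat N (fst (snd (fst x))) (fst (snd (fst (snd x))))) \<in> borel_measurable ?M"
        by (rule F.pihat_meas[OF md'[unfolded D'_def] mSx])
      have c2: "(\<lambda>x. phat (fst (fst x)) k (fst (fst (snd x))) (fst (snd (fst (snd x))))) \<in> borel_measurable ?M"
      proof -
        have "(\<lambda>x. (fst (fst x), (fst (fst (snd x)), fst (snd (fst (snd x)))))) \<in> ?M \<rightarrow>\<^sub>M (D \<Otimes>\<^sub>M XS_space)"
          using md mXSx by (rule measurable_Pair)
        from measurable_compose[OF this phj[rule_format, of k, folded D_def]] show ?thesis by simp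
      qed
      have c3: "(\<lambda>x. snd (snd x) k) \<in> borel_measurable ?M"
      proof -
        have "(\<lambda>q. snd q k) \<in> borel_measurable (P \<Otimes>\<^sub>M Zf)"
          using measurable_snd''[OF Zf_comp[OF k], of P] by (simp add: Zf_def)
        from measurable_snd''[OF this, of T] show ?thesis by simp
      qed
      have c4: "(\<lambda>x. of_int (fst (snd (fst (snd x)))) :: real) \<in> borel_measurable ?M"
        using meas_count_fun2[OF mSx mSx, of "\<lambda>s t. of_int s"] by simp
      have c5: "(\<lambda>x. lamhat (fst (fst x)) (fst (snd (fst x))) (snd (snd (fst x))) k) \<in> borel_measurable ?M"
      proof -
        have "(\<lambda>(d, d', z). lamhat d d' z k) \<in> borel_measurable T"
          using lhm unfolding T_def D_def D'_def ZE_def by blast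
        from measurable_fst''[OF this, of "P \<Otimes>\<^sub>M Zf"] show ?thesis by (simp add: case_prod_beta')
      qed
      show "(\<lambda>x. pihat N (fst (snd (fst x))) (fst (snd (fst (snd x)))) *
              (phat (fst (fst x)) k (fst (fst (snd x))) (fst (snd (fst (snd x)))) + snd (snd x) k) -
              of_int (fst (snd (fst (snd x)))) * lamhat (fst (fst x)) (fst (snd (fst x))) (snd (snd (fst x))) k) \<in> borel_measurable ?M"
        by (intro borel_measurable_diff borel_measurable_times borel_measurable_add c1 c2 c3 c4 c5)
    qed
    have mf: "f \<in> borel_measurable T" unfolding f_def by (rule F.meas_rf(1)[OF pZf HM])
    have mU: "U \<in> borel_measurable T" unfolding U_def by (rule F.meas_rf(2)[OF pZf HM])
    have mphD: "(\<lambda>x. phat (fst x) k (fst (snd x)) (fst (snd (snd x)))) \<in> borel_measurable (D \<Otimes>\<^sub>M P)" for k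
    proof -
      have "(\<lambda>x. (fst x, (fst (snd x), fst (snd (snd x))))) \<in> (D \<Otimes>\<^sub>M P) \<rightarrow>\<^sub>M (D \<Otimes>\<^sub>M XS_space)"
        using measurable_snd''[OF F.mXS, of D] by (intro measurable_Pair) auto
      from measurable_compose[OF this phj[rule_format, of k, folded D_def]] show ?thesis by simp
    qed
    have mpD: "(\<lambda>x. p k (fst (snd x)) (fst (snd (snd x)))) \<in> borel_measurable (D \<Otimes>\<^sub>M P)" for k
      using measurable_snd''[OF F.mp[of k], of D] by simp
    define fd where "fd = (\<lambda>d (w::'x \<times> int \<times> nat). (\<Sum>k\<in>{1..K}. \<bar>phat d k (fst w) (fst (snd w)) - p k (fst w) (fst (snd w))\<bar>))"
    have mfd: "case_prod fd \<in> borel_measurable (D \<Otimes>\<^sub>M P)"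
    proof -
      have "(\<lambda>x. \<Sum>k\<in>{1..K}. \<bar>phat (fst x) k (fst (snd x)) (fst (snd (snd x))) - p k (fst (snd x)) (fst (snd (snd x)))\<bar>) \<in> borel_measurable (D \<Otimes>\<^sub>M P)"
        using mphD mpD by (intro borel_measurable_sum borel_measurable_abs borel_measurable_diff) auto
      then show ?thesis by (simp add: fd_def case_prod_beta')
    qed
    have fdb: "0 \<le> fd d w \<and> fd d w \<le> real K" for d w
    proof -
      have "fd d w \<le> (\<Sum>k\<in>{1..K}. 1)" unfolding fd_def
      proof (intro sum_mono)
        fix k
        have "0 \<le> phat d k (fst w) (fst (snd w))" "phat d k (fst w) (fst (snd w)) \<le> 1" using phr by auto
        moreover have "0 \<le> p k (fst w) (fst (snd w))" "p k (fst w) (fst (snd w)) \<le> 1" using p_range by auto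
        ultimately show "\<bar>phat d k (fst w) (fst (snd w)) - p k (fst w) (fst (snd w))\<bar> \<le> 1" by (simp add: abs_le_iff)
      qed
      moreover have "0 \<le> fd d w" unfolding fd_def by (intro sum_nonneg) auto
      ultimately show ?thesis by simp
    qed
    have ifd: "integrable P (fd d)" if d: "d \<in> space D" for d
    proof (rule int_bdd[OF PP.finite_measure_axioms _ , where B="real K"])
      have "(\<lambda>w. (d, w)) \<in> P \<rightarrow>\<^sub>M (D \<Otimes>\<^sub>M P)" using d by measurable
      from measurable_compose[OF this mfd] show "fd d \<in> borel_measurable P" by simp
      fix w show "\<bar>fd d w\<bar> \<le> real K" using fdb[of d w] by simp
    qed
    have aeq: "a = (\<lambda>d. \<integral>w. fd d w \<partial>P)" unfolding a_def fd_def ..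
    have ma: "a \<in> borel_measurable D" unfolding aeq
      by (rule PP.borel_measurable_lebesgue_integral[OF mfd])
    have ab: "\<bar>a d\<bar> \<le> real K" if d: "d \<in> space D" for d
    proof -
      have "0 \<le> a d" unfolding aeq using fdb by (simp add: Bochner_Integration.integral_nonneg)
      moreover have "a d \<le> real K" unfolding aeq
        using PP.integral_le_const[OF ifd[OF d], of "real K"] fdb by auto
      ultimately show ?thesis by simp
    qed
    have mpi: "(\<lambda>d'. pihat N d' s) \<in> borel_measurable D'" for s
      unfolding D'_def by (rule F.pihat_meas[OF measurable_ident_sets[OF refl] measurable_const]) simp
    have mb: "b \<in> borel_measurable D'" unfolding b_def using mpi by measurable
    have pib: "\<bar>pihat N d' s - piS P s\<bar> \<le> 1" for d' s
    proof -
      have "0 \<le> pihat N d' s" "pihat N d' s \<le> 1" using pihat_bnd by auto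
      moreover have "0 \<le> piS P s" "piS P s \<le> 1" unfolding piS_def by (auto simp: PP.prob_le_1)
      ultimately show ?thesis by (simp add: abs_le_iff)
    qed
    have bb: "\<bar>b d'\<bar> \<le> 2" for d'
    proof -
      have "b d' \<le> 1 + 1" unfolding b_def using pib[of d' 1] pib[of d' "-1"] by simp
      moreover have "0 \<le> b d'" unfolding b_def by simp
      ultimately show ?thesis by simp
    qed
    have intf: "integrable T f"
      by (rule int_bdd[OF TT.finite_measure_axioms mf, where B="1 + (\<Sum>k\<in>{1..K}. \<bar>lamstar k\<bar>) * (1 / piS P 1 + 1 / piS P (-1))"]) (unfold f_def, rule F.rfrisk_bnd[OF pZf])
    have intU: "integrable T U"
      by (rule int_bdd[OF TT.finite_measure_axioms mU, where B="1 / piS P 1 + 1 / piS P (-1)"]) (unfold U_def, rule F.runfair_bnd2[OF pZf])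
    have inta: "integrable T (\<lambda>t. a (fst t))"
    proof (rule int_bdd[OF TT.finite_measure_axioms _, where B="real K"])
      show "(\<lambda>t. a (fst t)) \<in> borel_measurable T" unfolding T_def using measurable_fst''[OF ma, of "D' \<Otimes>\<^sub>M ZE"] by simp
      fix t assume "t \<in> space T" then have "fst t \<in> space D" by (auto simp: T_def space_pair_measure mem_Times_iff)
      then show "\<bar>a (fst t)\<bar> \<le> real K" by (rule ab)
    qed
    have intb: "integrable T (\<lambda>t. b (fst (snd t)))"
    proof (rule int_bdd[OF TT.finite_measure_axioms _, where B=2])
      show "(\<lambda>t. b (fst (snd t))) \<in> borel_measurable T" unfolding T_def
        using measurable_snd''[OF measurable_fst''[OF mb, of ZE], of D] by simp
      fix t show "\<bar>b (fst (snd t))\<bar> \<le> 2" by (rule bb)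
    qed
    have AEz: "AE t in T. \<forall>s k i. s \<in> {-1,1} \<longrightarrow> k \<in> {1..K} \<longrightarrow> i < N \<longrightarrow> 0 \<le> snd (snd t) (s,k,i) \<and> snd (snd t) (s,k,i) \<le> u"
    proof -
      let ?I = "{-1,1::int} \<times> {1..K} \<times> {..<N}"
      have "AE z in ZE. \<forall>j\<in>?I. 0 \<le> z j \<and> z j \<le> u"
      proof (rule eventually_ball_finite)
        show "finite ?I" by simp
        show "\<forall>j\<in>?I. AE z in ZE. 0 \<le> z j \<and> z j \<le> u"
        proof
          fix j assume j: "j \<in> ?I"
          show "AE z in ZE. 0 \<le> z j \<and> z j \<le> u"
            unfolding ZE_def Zemp_def
            by (rule AE_PiM_component[of ?I "\<lambda>_. unif u" j "\<lambda>x. 0 \<le> x \<and> x \<le> u"]) (use unif_prob[OF u] unif_AE j in auto)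
        qed
      qed
      then have "AE z in ZE. \<forall>s k i. s \<in> {-1,1} \<longrightarrow> k \<in> {1..K} \<longrightarrow> i < N \<longrightarrow> 0 \<le> z (s,k,i) \<and> z (s,k,i) \<le> u"
        by (rule AE_mp) (auto intro!: AE_I2)
      then have "AE y in D' \<Otimes>\<^sub>M ZE. \<forall>s k i. s \<in> {-1,1} \<longrightarrow> k \<in> {1..K} \<longrightarrow> i < N \<longrightarrow> 0 \<le> snd y (s,k,i) \<and> snd y (s,k,i) \<le> u"
        by (rule AE_pair_snd[OF pD' pZE])
      then show ?thesis unfolding T_def by (rule AE_pair_snd[OF pD pD'ZE])
    qed
    have pw: "f t - c \<le> C * (a (fst t) + b (fst (snd t)) + U t + u)"
      if t: "t \<in> space T" and zt: "\<forall>s k i. s \<in> {-1,1} \<longrightarrow> k \<in> {1..K} \<longrightarrow> i < N \<longrightarrow> 0 \<le> snd (snd t) (s,k,i) \<and> snd (snd t) (s,k,i) \<le> u" for t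
    proof -
      have tD: "fst t \<in> space D" and tD': "fst (snd t) \<in> space D'" and tZ: "snd (snd t) \<in> space ZE"
        using t by (auto simp: T_def space_pair_measure mem_Times_iff)
      have phm: "(\<lambda>xs. phat (fst t) k (fst xs) (snd xs)) \<in> borel_measurable XS_space" for k
      proof -
        have "(\<lambda>xs. (fst t, xs)) \<in> XS_space \<rightarrow>\<^sub>M (D \<Otimes>\<^sub>M XS_space)" using tD by measurable
        from measurable_compose[OF this phj[rule_format, of k, folded D_def]] show ?thesis by (simp add: case_prod_beta')
      qed
      have lm: "Nsz N (fst (snd t)) 1 > 0 \<and> Nsz N (fst (snd t)) (-1) > 0 \<longrightarrow>
          (\<forall>lam. emp_obj K N (phat (fst t)) (fst (snd t)) (snd (snd t)) (lamhat (fst t) (fst (snd t)) (snd (snd t)))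
              \<le> emp_obj K N (phat (fst t)) (fst (snd t)) (snd (snd t)) lam)"
        using lhmin tD tD' tZ unfolding D_def D'_def ZE_def by blast
      have "rfrisk P (Zfresh K u) K lamstar (ghat K N (phat (fst t)) (fst (snd t)) (lamhat (fst t) (fst (snd t)) (snd (snd t))))
             - rfrisk P Zdet K lamstar (\<lambda>x s _. gfair P p K lamstar x s)
          \<le> ((3 + 3 * real K) / min (piS P 1) (piS P (-1))) *
             ((\<integral>w. (\<Sum>k\<in>{1..K}. \<bar>phat (fst t) k (fst w) (fst (snd w)) - p k (fst w) (fst (snd w))\<bar>) \<partial>P)
              + (\<Sum>s\<in>{-1,1::int}. \<bar>pihat N (fst (snd t)) s - piS P s\<bar>)
              + runfair P (Zfresh K u) K (ghat K N (phat (fst t)) (fst (snd t)) (lamhat (fst t) (fst (snd t)) (snd (snd t)))) + u)"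
        by (rule F.point_bound[OF u phm _ lm _ lam_min]) (use phr zt in auto)
      then show ?thesis unfolding f_def c_def C_def m_def a_def b_def U_def Gt_def Zf_def .
    qed
    have "(\<integral>t. f t \<partial>T) - c = (\<integral>t. f t - c \<partial>T)"
      using intf by (simp add: TT.prob_space)
    also have "\<dots> \<le> (\<integral>t. C * (a (fst t) + b (fst (snd t)) + U t + u) \<partial>T)"
    proof (rule integral_mono_AE)
      show "integrable T (\<lambda>t. f t - c)" using intf by simp
      show "integrable T (\<lambda>t. C * (a (fst t) + b (fst (snd t)) + U t + u))"
        using inta intb intU by simp
      show "AE t in T. f t - c \<le> C * (a (fst t) + b (fst (snd t)) + U t + u)"
        using AEz by (rule AE_mp) (auto intro!: AE_I2 pw)
    qed
    also have "\<dots> = C * ((\<integral>t. a (fst t) \<partial>T) + (\<integral>t. b (fst (snd t)) \<partial>T) + (\<integral>t. U t \<partial>T) + u)"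
      using inta intb intU by (simp add: TT.prob_space)
    also have "(\<integral>t. a (fst t) \<partial>T) = (\<integral>d. a d \<partial>D)"
      unfolding T_def by (rule int_pair_fst[OF pD'ZE ma])
    also have "(\<integral>t. b (fst (snd t)) \<partial>T) = (\<Sum>s\<in>{-1, 1::int}. \<integral>d'. \<bar>pihat N d' s - piS P s\<bar> \<partial>D')"
    proof -
      have "(\<integral>t. b (fst (snd t)) \<partial>T) = (\<integral>y. b (fst y) \<partial>(D' \<Otimes>\<^sub>M ZE))"
        unfolding T_def by (rule int_pair_snd[OF pD pD'ZE]) (use measurable_fst''[OF mb, of ZE] in simp)
      also have "\<dots> = (\<integral>d'. b d' \<partial>D')" by (rule int_pair_fst[OF pZE mb])
      also have "\<dots> = (\<Sum>s\<in>{-1, 1::int}. \<integral>d'. \<bar>pihat N d' s - piS P s\<bar> \<partial>D')"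
        unfolding b_def
      proof (rule Bochner_Integration.integral_sum)
        fix s :: int
        show "integrable D' (\<lambda>d'. \<bar>pihat N d' s - piS P s\<bar>)"
          using mpi pib by (intro int_bdd[OF DD'.finite_measure_axioms, where B=1]) auto
      qed
      finally show ?thesis .
    qed
    finally show "(\<integral>t. rfrisk P (Zfresh K u) K lamstar
              (ghat K N (phat (fst t)) (fst (snd t)) (lamhat (fst t) (fst (snd t)) (snd (snd t))))
         \<partial>(sampleD n P \<Otimes>\<^sub>M sampleD' N P \<Otimes>\<^sub>M Zemp K N u))
      - rfrisk P Zdet K lamstar (\<lambda>x s _. gfair P p K lamstar x s)
      \<le> C * ((\<integral>d. (\<integral>w. (\<Sum>k\<in>{1..K}. \<bar>phat d k (fst w) (fst (snd w)) - p k (fst w) (fst (snd w))\<bar>) \<partial>P)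
                  \<partial>sampleD n P)
            + (\<Sum>s\<in>{-1, 1::int}. \<integral>d'. \<bar>pihat N d' s - piS P s\<bar> \<partial>sampleD' N P)
            + (\<integral>t. runfair P (Zfresh K u) K
                    (ghat K N (phat (fst t)) (fst (snd t)) (lamhat (fst t) (fst (snd t)) (snd (snd t))))
                 \<partial>(sampleD n P \<Otimes>\<^sub>M sampleD' N P \<Otimes>\<^sub>M Zemp K N u))
            + u)"
      unfolding f_def U_def a_def Gt_def T_def D_def D'_def ZE_def Zf_def c_def .
  qed
qed


end
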